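(* Let $n\ge3$ and $\lambda\ge1$ be integers and let $A,X,Y,a,x,y,z,H,J$ be as below. Then $(x,y,z)$ is a flag-regular triple for $A$, and $\mathbf Q_n^{(\lambda)}\cong\mathrm{Cos}(A,H,J)\cong\mathrm{Cos}(X,\langle a\rangle,\langle z\rangle)\cong\mathrm{Cos}(Y,\langle a\rangle,\langle zx\rangle)$, a graph of valency $n$ and edge-multiplicity $\lambda$.
   Context: $A=N\rtimes(\langle a\rangle\rtimes\langle x\rangle)$, where $N=\langle v_0,\dots,v_{n-1}\rangle\cong\mathbb Z_2^n$ is elementary abelian with basis $v_0,\dots,v_{n-1}$, $|a|=n\lambda$, $|x|=2$, $a^x=a^{-1}$, $v_i^a=v_{i+1}$ and $v_i^x=v_{n-i}$ (indices mod $n$). Let $z=v_0$, $y=ax$, $H=\langle x,y\rangle=\langle a\rangle\rtimes\langle x\rangle\cong D_{2n\lambda}$, $J=\langle x,z\rangle\cong\mathbb Z_2^2$, $X=N\rtimes\langle a\rangle=\langle a,z\rangle$, and $Y=(\langle v_0v_1,\dots,v_{n-2}v_{n-1}\rangle\rtimes\langle a\rangle)\rtimes\langle zx\rangle=\langle a,zx\rangle$. A flag-regular triple for a group $G$ is $(x,y,z)$, pairwise distinct involutions with $G=\langle x,y,z\rangle$, $xz=zx$, $z\notin\langle x,y\rangle$, $|xy|,|yz|$ finite. $\mathrm{Cos}(G,H,J)$: vertices the right cosets of $H$, edges the right cosets of $J$, $Hu$ incident with $Jv$ iff $vu^{-1}\in JH$. $\mathbf Q_n$ is the $n$-dimensional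 hypercube (vertices $\mathbb Z_2^n$, adjacent iff differing in exactly one coordinate) and $\mathbf Q_n^{(\lambda)}$ is obtained by replacing each edge by $\lambda$ parallel edges. *)

theory Defs
  imports "HOL-Algebra.Multiplicative_Group" "HOL-Algebra.Generated_Groups"
begin

record ('v, 'e) incgraph =
  verts :: "'v set"
  edges :: "'e set"
  inc   :: "'v \<Rightarrow> 'e \<Rightarrow> bool"

definition incgraph_iso :: "('v, 'e) incgraph \<Rightarrow> ('w, 'f) incgraph \<Rightarrow> bool" where
  "incgraph_iso G1 G2 \<longleftrightarrow>
     (\<exists>f g. bij_betw f (verts G1) (verts G2) \<and> bij_betw g (edges G1) (edges G2) \<and>
        (\<forall>v\<in>verts G1. \<forall>e\<in>edges G1. inc G1 v e \<longleftrightarrow> inc G2 (f v) (g e)))"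

definition ends :: "('v, 'e) incgraph \<Rightarrow> 'e \<Rightarrow> 'v set" where
  "ends G e = {v \<in> verts G. inc G v e}"

definition nbrs :: "('v, 'e) incgraph \<Rightarrow> 'v \<Rightarrow> 'v set" where
  "nbrs G u = {w \<in> verts G. w \<noteq> u \<and> (\<exists>e\<in>edges G. inc G u e \<and> inc G w e)}"

definition valency_multiplicity :: "('v, 'e) incgraph \<Rightarrow> nat \<Rightarrow> nat \<Rightarrow> bool" where
  "valency_multiplicity G k m \<longleftrightarrow>
     finite (verts G) \<and> finite (edges G) \<and>
     (\<forall>e\<in>edges G. card (ends G e) = 2) \<and>
     (\<forall>u\<in>verts G. card (nbrs G u) = k) \<and>
     (\<forall>u\<in>verts G. \<forall>w\<in>nbrs G u. card {e\<in>edges G. inc G u e \<and> inc G w e} = m)"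

definition cos_graph :: "('a, 'b) monoid_scheme \<Rightarrow> 'a set \<Rightarrow> 'a set \<Rightarrow> ('a set, 'a set) incgraph" where
  "cos_graph G H J =
     \<lparr> verts = rcosets\<^bsub>G\<^esub> H,
       edges = rcosets\<^bsub>G\<^esub> J,
       inc = (\<lambda>C D. \<exists>u\<in>carrier G. \<exists>v\<in>carrier G.
                C = H #>\<^bsub>G\<^esub> u \<and> D = J #>\<^bsub>G\<^esub> v \<and>
                v \<otimes>\<^bsub>G\<^esub> inv\<^bsub>G\<^esub> u \<in> J <#>\<^bsub>G\<^esub> H) \<rparr>"

text \<open>Q_n^(l): vertices Z_2^n (encoded as subsets of {0..<n}, i.e. supports of 0/1
  vectors); two vertices adjacent iff they differ in exactly one coordinate
  (symmetric difference of cardinality 1); each edge of Q_n replaced by l parallel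
  edges, labelled by j < l.\<close>
definition hypercube_mult :: "nat \<Rightarrow> nat \<Rightarrow> (nat set, nat set set \<times> nat) incgraph" where
  "hypercube_mult n l =
     \<lparr> verts = Pow {..<n},
       edges = {({S, T}, j) | S T j. S \<subseteq> {..<n} \<and> T \<subseteq> {..<n} \<and>
                                     card ((S - T) \<union> (T - S)) = 1 \<and> j < l},
       inc = (\<lambda>v e. v \<in> fst e) \<rparr>"

definition involution :: "('a, 'b) monoid_scheme \<Rightarrow> 'a \<Rightarrow> bool" where
  "involution G g \<longleftrightarrow> g \<in> carrier G \<and> g \<noteq> \<one>\<^bsub>G\<^esub> \<and> g \<otimes>\<^bsub>G\<^esub> g = \<one>\<^bsub>G\<^esub>"

text \<open>group.ord is 0 exactly for elements of infinite order.\<close>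
definition flag_regular_triple :: "('a, 'b) monoid_scheme \<Rightarrow> 'a \<Rightarrow> 'a \<Rightarrow> 'a \<Rightarrow> bool" where
  "flag_regular_triple G x y z \<longleftrightarrow>
     group G \<and> involution G x \<and> involution G y \<and> involution G z \<and>
     x \<noteq> y \<and> y \<noteq> z \<and> x \<noteq> z \<and>
     generate G {x, y, z} = carrier G \<and>
     x \<otimes>\<^bsub>G\<^esub> z = z \<otimes>\<^bsub>G\<^esub> x \<and>
     z \<notin> generate G {x, y} \<and>
     group.ord G (x \<otimes>\<^bsub>G\<^esub> y) \<noteq> 0 \<and> group.ord G (y \<otimes>\<^bsub>G\<^esub> z) \<noteq> 0"

text \<open>An element (k, e, S) stands for  a^k x^e \<cdot> \<Prod>_{i\<in>S} v_i,
  with 0 \<le> k < n*l, e a boolean (x^1 if e), and S \<subseteq> {0..<n}.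
  In the dihedral group <a> \<rtimes> <x>:  a^k1 x^e1 a^k2 x^e2 = a^(k1 \<plusminus> k2) x^(e1+e2).
  The right action of h = a^k x^e on the basis of N: v_i^(a^k x^e) = v_j where
  j = i+k (mod n) if e is false, j = -(i+k) (mod n) if e is true;
  this is the action v_i^a = v_(i+1), v_i^x = v_(n-i).
  Multiplication: (h1 n1)(h2 n2) = (h1 h2)(n1^h2 n2).\<close>

definition dih_mult :: "nat \<Rightarrow> nat \<Rightarrow> int \<times> bool \<Rightarrow> int \<times> bool \<Rightarrow> int \<times> bool" where
  "dih_mult n l h1 h2 =
     ((fst h1 + (if snd h1 then - fst h2 else fst h2)) mod (int n * int l), snd h1 \<noteq> snd h2)"

definition hact :: "nat \<Rightarrow> int \<times> bool \<Rightarrow> int \<Rightarrow> int" where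
  "hact n h i = (if snd h then - (i + fst h) else i + fst h) mod int n"

definition groupA :: "nat \<Rightarrow> nat \<Rightarrow> (int \<times> bool \<times> int set) monoid" where
  "groupA n l =
     \<lparr> carrier = {(k, e, S). 0 \<le> k \<and> k < int n * int l \<and> S \<subseteq> {0..<int n}},
       mult = (\<lambda>(k1, e1, S1) (k2, e2, S2).
                 let h = dih_mult n l (k1, e1) (k2, e2);
                     S = (hact n (k2, e2) ` S1 - S2) \<union> (S2 - hact n (k2, e2) ` S1)
                 in (fst h, snd h, S)),
       one = (0, False, {}) \<rparr>"

definition elem_a :: "nat \<Rightarrow> nat \<Rightarrow> int \<times> bool \<times> int set" where
  "elem_a n l = (1 mod (int n * int l), False, {})"

definition elem_x :: "int \<times> bool \<times> int set" where
  "elem_x = (0, True, {})"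

definition elem_z :: "int \<times> bool \<times> int set" where
  "elem_z = (0, False, {0})"

end

theory Submission
  imports Defs
begin


lemma (in group) inv_cancel_l1: "x \<in> carrier G \<Longrightarrow> y \<in> carrier G \<Longrightarrow> inv x \<otimes> (x \<otimes> y) = y"
  by (simp add: m_assoc[symmetric])
lemma (in group) inv_cancel_l2: "x \<in> carrier G \<Longrightarrow> y \<in> carrier G \<Longrightarrow> x \<otimes> (inv x \<otimes> y) = y"
  by (simp add: m_assoc[symmetric])

lemma rcos_eq_iff:
  fixes G (structure)
  assumes G: "group G" and sH: "subgroup H G" and u: "u \<in> carrier G" and u': "u' \<in> carrier G"
  shows "(H #>\<^bsub>G\<^esub> u = H #>\<^bsub>G\<^esub> u') \<longleftrightarrow> u' \<otimes>\<^bsub>G\<^esub> inv\<^bsub>G\<^esub> u \<in> H"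
proof
  assume "H #>\<^bsub>G\<^esub> u = H #>\<^bsub>G\<^esub> u'"
  moreover have "u' \<in> H #>\<^bsub>G\<^esub> u'" using group.rcos_self[OF G u' sH] .
  ultimately have "u' \<in> H #>\<^bsub>G\<^esub> u" by simp
  thus "u' \<otimes>\<^bsub>G\<^esub> inv\<^bsub>G\<^esub> u \<in> H" using subgroup.rcos_module[OF sH G u u'] by simp
next
  assume "u' \<otimes>\<^bsub>G\<^esub> inv\<^bsub>G\<^esub> u \<in> H"
  hence "u' \<in> H #>\<^bsub>G\<^esub> u" using subgroup.rcos_module[OF sH G u u'] by simp
  thus "H #>\<^bsub>G\<^esub> u = H #>\<^bsub>G\<^esub> u'" using group.repr_independence[OF G _ u sH] by simp
qed

lemma inc_char:
  fixes G (structure)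
  assumes G: "group G" and sH: "subgroup H G" and sJ: "subgroup J G"
    and u0: "u0 \<in> carrier G" and v0: "v0 \<in> carrier G"
  shows "inc (cos_graph G H J) (H #>\<^bsub>G\<^esub> u0) (J #>\<^bsub>G\<^esub> v0) \<longleftrightarrow> v0 \<otimes>\<^bsub>G\<^esub> inv\<^bsub>G\<^esub> u0 \<in> J <#>\<^bsub>G\<^esub> H"
proof
  interpret group G by (rule G)
  assume "inc (cos_graph G H J) (H #> u0) (J #> v0)"
  hence "\<exists>u\<in>carrier G. \<exists>v\<in>carrier G. H #> u0 = H #> u \<and> J #> v0 = J #> v \<and> v \<otimes> inv u \<in> J <#> H"
    unfolding cos_graph_def by simp
  then obtain u v where u: "u \<in> carrier G" and v: "v \<in> carrier G" and eu: "H #> u0 = H #> u"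
    and ev: "J #> v0 = J #> v" and m: "v \<otimes> inv u \<in> J <#> H"
    by blast
  have h1: "u \<otimes> inv u0 \<in> H" using rcos_eq_iff[OF G sH u0 u] eu by simp
  have j1: "v \<otimes> inv v0 \<in> J" using rcos_eq_iff[OF G sJ v0 v] ev by simp
  from m obtain j h where j: "j \<in> J" and h: "h \<in> H" and jh: "v \<otimes> inv u = j \<otimes> h"
    by (auto simp: set_mult_def)
  have Hc: "H \<subseteq> carrier G" and Jc: "J \<subseteq> carrier G" using sH sJ subgroup.subset by auto
  have eq: "v0 \<otimes> inv u0 = inv (v \<otimes> inv v0) \<otimes> (v \<otimes> inv u) \<otimes> (u \<otimes> inv u0)"
    using u v u0 v0 by (simp add: m_assoc inv_mult_group inv_cancel_l1 inv_cancel_l2)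
  also have "\<dots> = (inv (v \<otimes> inv v0) \<otimes> j) \<otimes> (h \<otimes> (u \<otimes> inv u0))"
    using jh j h Jc Hc u v u0 v0 by (simp add: m_assoc subsetD)
  finally have "v0 \<otimes> inv u0 = (inv (v \<otimes> inv v0) \<otimes> j) \<otimes> (h \<otimes> (u \<otimes> inv u0))" .
  moreover have "inv (v \<otimes> inv v0) \<otimes> j \<in> J" using j j1 sJ by (simp add: subgroup.m_closed subgroup.m_inv_closed)
  moreover have "h \<otimes> (u \<otimes> inv u0) \<in> H" using h h1 sH by (simp add: subgroup.m_closed)
  ultimately show "v0 \<otimes> inv u0 \<in> J <#> H" by (auto simp: set_mult_def)
next
  assume "v0 \<otimes>\<^bsub>G\<^esub> inv\<^bsub>G\<^esub> u0 \<in> J <#>\<^bsub>G\<^esub> H"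
  hence "\<exists>u\<in>carrier G. \<exists>v\<in>carrier G. H #> u0 = H #> u \<and> J #> v0 = J #> v \<and> v \<otimes> inv u \<in> J <#> H"
    using u0 v0 by blast
  thus "inc (cos_graph G H J) (H #>\<^bsub>G\<^esub> u0) (J #>\<^bsub>G\<^esub> v0)" unfolding cos_graph_def by simp
qed

lemma verts_cos: "verts (cos_graph G H J) = (\<lambda>u. H #>\<^bsub>G\<^esub> u) ` carrier G"
  unfolding cos_graph_def RCOSETS_def by auto
lemma edges_cos: "edges (cos_graph G H J) = (\<lambda>u. J #>\<^bsub>G\<^esub> u) ` carrier G"
  unfolding cos_graph_def RCOSETS_def by auto

lemma iso_labels:
  fixes G (structure) and Q :: "('v,'e) incgraph"
  assumes G: "group G" and sH: "subgroup H G" and sJ: "subgroup J G"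
    and fV: "phiV ` carrier G = verts Q"
    and eqV: "\<And>u u'. u \<in> carrier G \<Longrightarrow> u' \<in> carrier G \<Longrightarrow> u' \<otimes> inv u \<in> H \<longleftrightarrow> phiV u = phiV u'"
    and fE: "phiE ` carrier G = edges Q"
    and eqE: "\<And>u u'. u \<in> carrier G \<Longrightarrow> u' \<in> carrier G \<Longrightarrow> u' \<otimes> inv u \<in> J \<longleftrightarrow> phiE u = phiE u'"
    and incQ: "\<And>u v. u \<in> carrier G \<Longrightarrow> v \<in> carrier G \<Longrightarrow> v \<otimes> inv u \<in> J <#> H \<longleftrightarrow> inc Q (phiV u) (phiE v)"
  shows "incgraph_iso Q (cos_graph G H J)"
proof -
  define sV where "sV q = (SOME u. u \<in> carrier G \<and> phiV u = q)" for q
  define sE where "sE q = (SOME u. u \<in> carrier G \<and> phiE u = q)" for q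
  have sV: "sV q \<in> carrier G \<and> phiV (sV q) = q" if "q \<in> verts Q" for q
  proof -
    have "q \<in> phiV ` carrier G" using that fV by simp
    then obtain u where "u \<in> carrier G" "phiV u = q" by blast
    thus ?thesis unfolding sV_def using someI[of "\<lambda>u. u \<in> carrier G \<and> phiV u = q" u] by blast
  qed
  have sE: "sE q \<in> carrier G \<and> phiE (sE q) = q" if "q \<in> edges Q" for q
  proof -
    have "q \<in> phiE ` carrier G" using that fE by simp
    then obtain u where "u \<in> carrier G" "phiE u = q" by blast
    thus ?thesis unfolding sE_def using someI[of "\<lambda>u. u \<in> carrier G \<and> phiE u = q" u] by blast
  qed
  have cV: "H #> u = H #> u' \<longleftrightarrow> phiV u = phiV u'" if "u \<in> carrier G" "u' \<in> carrier G" for u u'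
    using rcos_eq_iff[OF G sH that] eqV[OF that] by simp
  have cE: "J #> u = J #> u' \<longleftrightarrow> phiE u = phiE u'" if "u \<in> carrier G" "u' \<in> carrier G" for u u'
    using rcos_eq_iff[OF G sJ that] eqE[OF that] by simp
  have b1: "bij_betw (\<lambda>q. H #> sV q) (verts Q) (verts (cos_graph G H J))"
    unfolding bij_betw_def
  proof
    show "inj_on (\<lambda>q. H #> sV q) (verts Q)"
      by (rule inj_onI) (metis cV sV)
    show "(\<lambda>q. H #> sV q) ` verts Q = verts (cos_graph G H J)"
    proof
      show "(\<lambda>q. H #> sV q) ` verts Q \<subseteq> verts (cos_graph G H J)"
        using sV unfolding verts_cos by blast
      show "verts (cos_graph G H J) \<subseteq> (\<lambda>q. H #> sV q) ` verts Q"
      proof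
        fix C assume "C \<in> verts (cos_graph G H J)"
        then obtain u where u: "u \<in> carrier G" and C: "C = H #> u" unfolding verts_cos by blast
        have "phiV u \<in> verts Q" using u fV by blast
        hence "H #> sV (phiV u) = C" using cV[of "sV (phiV u)" u] sV[of "phiV u"] u C by auto
        thus "C \<in> (\<lambda>q. H #> sV q) ` verts Q" using \<open>phiV u \<in> verts Q\<close> by blast
      qed
    qed
  qed
  have b2: "bij_betw (\<lambda>q. J #> sE q) (edges Q) (edges (cos_graph G H J))"
    unfolding bij_betw_def
  proof
    show "inj_on (\<lambda>q. J #> sE q) (edges Q)"
      by (rule inj_onI) (metis cE sE)
    show "(\<lambda>q. J #> sE q) ` edges Q = edges (cos_graph G H J)"
    proof
      show "(\<lambda>q. J #> sE q) ` edges Q \<subseteq> edges (cos_graph G H J)"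
        using sE unfolding edges_cos by blast
      show "edges (cos_graph G H J) \<subseteq> (\<lambda>q. J #> sE q) ` edges Q"
      proof
        fix C assume "C \<in> edges (cos_graph G H J)"
        then obtain u where u: "u \<in> carrier G" and C: "C = J #> u" unfolding edges_cos by blast
        have "phiE u \<in> edges Q" using u fE by blast
        hence "J #> sE (phiE u) = C" using cE[of "sE (phiE u)" u] sE[of "phiE u"] u C by auto
        thus "C \<in> (\<lambda>q. J #> sE q) ` edges Q" using \<open>phiE u \<in> edges Q\<close> by blast
      qed
    qed
  qed
  have i: "inc Q v e \<longleftrightarrow> inc (cos_graph G H J) (H #> sV v) (J #> sE e)"
    if "v \<in> verts Q" "e \<in> edges Q" for v e
    using inc_char[OF G sH sJ, of "sV v" "sE e"] incQ[of "sV v" "sE e"] sV[OF that(1)] sE[OF that(2)] by simp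
  show ?thesis unfolding incgraph_iso_def using b1 b2 i by blast
qed

lemma iso_sym:
  assumes "incgraph_iso G1 G2" shows "incgraph_iso G2 G1"
proof -
  from assms obtain f g where f: "bij_betw f (verts G1) (verts G2)" and g: "bij_betw g (edges G1) (edges G2)"
    and i: "\<forall>v\<in>verts G1. \<forall>e\<in>edges G1. inc G1 v e \<longleftrightarrow> inc G2 (f v) (g e)"
    unfolding incgraph_iso_def by blast
  let ?f = "inv_into (verts G1) f" and ?g = "inv_into (edges G1) g"
  have "bij_betw ?f (verts G2) (verts G1)" "bij_betw ?g (edges G2) (edges G1)"
    using f g by (auto intro: bij_betw_inv_into)
  moreover have "\<forall>v\<in>verts G2. \<forall>e\<in>edges G2. inc G2 v e \<longleftrightarrow> inc G1 (?f v) (?g e)"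
  proof (intro ballI)
    fix v e assume v: "v \<in> verts G2" and e: "e \<in> edges G2"
    have "?f v \<in> verts G1" "?g e \<in> edges G1" "f (?f v) = v" "g (?g e) = e"
      using v e f g by (auto simp: bij_betw_def inv_into_into f_inv_into_f)
    thus "inc G2 v e \<longleftrightarrow> inc G1 (?f v) (?g e)" using i by metis
  qed
  ultimately show ?thesis unfolding incgraph_iso_def by blast
qed

lemma iso_trans:
  assumes "incgraph_iso G1 G2" "incgraph_iso G2 G3" shows "incgraph_iso G1 G3"
proof -
  from assms(1) obtain f g where f: "bij_betw f (verts G1) (verts G2)" and g: "bij_betw g (edges G1) (edges G2)"
    and i: "\<forall>v\<in>verts G1. \<forall>e\<in>edges G1. inc G1 v e \<longleftrightarrow> inc G2 (f v) (g e)"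
    unfolding incgraph_iso_def by blast
  from assms(2) obtain f' g' where f': "bij_betw f' (verts G2) (verts G3)" and g': "bij_betw g' (edges G2) (edges G3)"
    and i': "\<forall>v\<in>verts G2. \<forall>e\<in>edges G2. inc G2 v e \<longleftrightarrow> inc G3 (f' v) (g' e)"
    unfolding incgraph_iso_def by blast
  have "bij_betw (f' o f) (verts G1) (verts G3)" "bij_betw (g' o g) (edges G1) (edges G3)"
    using f g f' g' by (auto intro: bij_betw_trans)
  moreover have "\<forall>v\<in>verts G1. \<forall>e\<in>edges G1. inc G1 v e \<longleftrightarrow> inc G3 ((f' o f) v) ((g' o g) e)"
  proof (intro ballI)
    fix v e assume v: "v \<in> verts G1" and e: "e \<in> edges G1"
    have "f v \<in> verts G2" "g e \<in> edges G2" using f g v e by (auto simp: bij_betw_def)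
    thus "inc G1 v e \<longleftrightarrow> inc G3 ((f' o f) v) ((g' o g) e)" using i i' v e by simp
  qed
  ultimately show ?thesis unfolding incgraph_iso_def by blast
qed

lemma iso_valency:
  assumes "incgraph_iso G1 G2" "valency_multiplicity G1 k m" shows "valency_multiplicity G2 k m"
proof -
  from assms(1) obtain f g where f: "bij_betw f (verts G1) (verts G2)" and g: "bij_betw g (edges G1) (edges G2)"
    and i: "\<forall>v\<in>verts G1. \<forall>e\<in>edges G1. inc G1 v e \<longleftrightarrow> inc G2 (f v) (g e)"
    unfolding incgraph_iso_def by blast
  have fi: "inj_on f (verts G1)" and fs: "f ` verts G1 = verts G2" using f by (auto simp: bij_betw_def)
  have gi: "inj_on g (edges G1)" and gs: "g ` edges G1 = edges G2" using g by (auto simp: bij_betw_def)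
  have V1: "finite (verts G1)" and V2: "finite (edges G1)" and V3: "\<forall>e\<in>edges G1. card (ends G1 e) = 2"
    and V4: "\<forall>u\<in>verts G1. card (nbrs G1 u) = k"
    and V5: "\<forall>u\<in>verts G1. \<forall>w\<in>nbrs G1 u. card {e \<in> edges G1. inc G1 u e \<and> inc G1 w e} = m"
    using assms(2) unfolding valency_multiplicity_def by auto
  have I: "inc G1 v e \<longleftrightarrow> inc G2 (f v) (g e)" if "v \<in> verts G1" "e \<in> edges G1" for v e
    using i that by blast
  have fv: "f v \<in> verts G2" if "v \<in> verts G1" for v using fs that by blast
  have ge: "g e \<in> edges G2" if "e \<in> edges G1" for e using gs that by blast
  have ends: "ends G2 (g e) = f ` ends G1 e" if e: "e \<in> edges G1" for e
  proof
    show "ends G2 (g e) \<subseteq> f ` ends G1 e"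
    proof
      fix x assume "x \<in> ends G2 (g e)"
      hence x1: "x \<in> verts G2" and x2: "inc G2 x (g e)" unfolding ends_def by simp_all
      from x1 fs obtain v where v: "v \<in> verts G1" "x = f v" by blast
      have "inc G1 v e" using I[OF v(1) e] x2 v(2) by simp
      hence "v \<in> ends G1 e" unfolding ends_def using v(1) by simp
      thus "x \<in> f ` ends G1 e" using v(2) by blast
    qed
    show "f ` ends G1 e \<subseteq> ends G2 (g e)"
    proof
      fix x assume "x \<in> f ` ends G1 e"
      then obtain v where v: "v \<in> ends G1 e" "x = f v" by blast
      hence v1: "v \<in> verts G1" "inc G1 v e" unfolding ends_def by simp_all
      show "x \<in> ends G2 (g e)" unfolding ends_def using v(2) v1 I[OF v1(1) e] fv[OF v1(1)] by simp
    qed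
  qed
  have nb: "nbrs G2 (f u) = f ` nbrs G1 u" if u: "u \<in> verts G1" for u
  proof
    show "nbrs G2 (f u) \<subseteq> f ` nbrs G1 u"
    proof
      fix w2 assume "w2 \<in> nbrs G2 (f u)"
      then obtain e2 where w2: "w2 \<in> verts G2" "w2 \<noteq> f u" and e2: "e2 \<in> edges G2" "inc G2 (f u) e2" "inc G2 w2 e2"
        unfolding nbrs_def by blast
      from w2(1) fs obtain w where w: "w \<in> verts G1" "w2 = f w" by blast
      from e2(1) gs obtain e where e: "e \<in> edges G1" "e2 = g e" by blast
      have "inc G1 u e" "inc G1 w e" using I[OF u e(1)] I[OF w(1) e(1)] e2 e(2) w(2) by simp_all
      moreover have "w \<noteq> u" using w2(2) w(2) by blast
      ultimately have "w \<in> nbrs G1 u" unfolding nbrs_def using w(1) e(1) by blast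
      thus "w2 \<in> f ` nbrs G1 u" using w(2) by blast
    qed
    show "f ` nbrs G1 u \<subseteq> nbrs G2 (f u)"
    proof
      fix w2 assume "w2 \<in> f ` nbrs G1 u"
      then obtain w where ww: "w \<in> nbrs G1 u" "w2 = f w" by blast
      then obtain e where w: "w \<in> verts G1" "w \<noteq> u" and e: "e \<in> edges G1" "inc G1 u e" "inc G1 w e"
        unfolding nbrs_def by blast
      have "f w \<noteq> f u" using fi w u by (metis inj_onD)
      moreover have "inc G2 (f u) (g e)" "inc G2 (f w) (g e)" using I[OF u e(1)] I[OF w(1) e(1)] e by simp_all
      ultimately have "f w \<in> nbrs G2 (f u)" unfolding nbrs_def using fv[OF w(1)] ge[OF e(1)] by auto
      thus "w2 \<in> nbrs G2 (f u)" using ww(2) by simp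
    qed
  qed
  have me: "{e \<in> edges G2. inc G2 (f u) e \<and> inc G2 (f w) e} = g ` {e \<in> edges G1. inc G1 u e \<and> inc G1 w e}"
    if u: "u \<in> verts G1" and w: "w \<in> verts G1" for u w
  proof
    show "g ` {e \<in> edges G1. inc G1 u e \<and> inc G1 w e} \<subseteq> {e \<in> edges G2. inc G2 (f u) e \<and> inc G2 (f w) e}"
    proof
      fix x assume "x \<in> g ` {e \<in> edges G1. inc G1 u e \<and> inc G1 w e}"
      then obtain e where e: "e \<in> edges G1" "inc G1 u e" "inc G1 w e" "x = g e" by blast
      thus "x \<in> {e \<in> edges G2. inc G2 (f u) e \<and> inc G2 (f w) e}"
        using I[OF u e(1)] I[OF w e(1)] ge[OF e(1)] by simp
    qed
    show "{e \<in> edges G2. inc G2 (f u) e \<and> inc G2 (f w) e} \<subseteq> g ` {e \<in> edges G1. inc G1 u e \<and> inc G1 w e}"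
    proof
      fix x assume x: "x \<in> {e \<in> edges G2. inc G2 (f u) e \<and> inc G2 (f w) e}"
      then obtain e where e: "e \<in> edges G1" "x = g e" using gs by blast
      hence "inc G1 u e" "inc G1 w e" using x I[OF u e(1)] I[OF w e(1)] by simp_all
      thus "x \<in> g ` {e \<in> edges G1. inc G1 u e \<and> inc G1 w e}" using e by blast
    qed
  qed
  show ?thesis unfolding valency_multiplicity_def
  proof (intro conjI ballI)
    show "finite (verts G2)" using finite_imageI[OF V1, of f] fs by simp
    show "finite (edges G2)" using finite_imageI[OF V2, of g] gs by simp
  next
    fix e2 assume "e2 \<in> edges G2"
    then obtain e where e: "e \<in> edges G1" "e2 = g e" using gs by blast
    have "ends G1 e \<subseteq> verts G1" unfolding ends_def by blast
    hence "card (f ` ends G1 e) = card (ends G1 e)" by (rule card_image[OF inj_on_subset[OF fi]])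
    moreover have "card (ends G1 e) = 2" using V3 e(1) by blast
    moreover have "ends G2 e2 = f ` ends G1 e" using ends[OF e(1)] e(2) by simp
    ultimately show "card (ends G2 e2) = 2" by simp
  next
    fix u2 assume "u2 \<in> verts G2"
    then obtain u where u: "u \<in> verts G1" "u2 = f u" using fs by blast
    have "nbrs G1 u \<subseteq> verts G1" unfolding nbrs_def by blast
    hence "card (f ` nbrs G1 u) = card (nbrs G1 u)" by (rule card_image[OF inj_on_subset[OF fi]])
    moreover have "card (nbrs G1 u) = k" using V4 u(1) by blast
    moreover have "nbrs G2 u2 = f ` nbrs G1 u" using nb[OF u(1)] u(2) by simp
    ultimately show "card (nbrs G2 u2) = k" by simp
  next
    fix u2 w2 assume u2: "u2 \<in> verts G2" and w2: "w2 \<in> nbrs G2 u2"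
    then obtain u where u: "u \<in> verts G1" "u2 = f u" using fs by blast
    have "w2 \<in> f ` nbrs G1 u" using w2 nb[OF u(1)] u(2) by simp
    then obtain w where w: "w \<in> nbrs G1 u" "w2 = f w" by blast
    have wv: "w \<in> verts G1" using w unfolding nbrs_def by blast
    have "card (g ` {e \<in> edges G1. inc G1 u e \<and> inc G1 w e}) = card {e \<in> edges G1. inc G1 u e \<and> inc G1 w e}"
      by (rule card_image, rule inj_on_subset[OF gi]) auto
    moreover have "card {e \<in> edges G1. inc G1 u e \<and> inc G1 w e} = m" using V5 u(1) w(1) by blast
    moreover have "{e \<in> edges G2. inc G2 u2 e \<and> inc G2 w2 e} = g ` {e \<in> edges G1. inc G1 u e \<and> inc G1 w e}"
      using me[OF u(1) wv] u(2) w(2) by simp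
    ultimately show "card {e \<in> edges G2. inc G2 u2 e \<and> inc G2 w2 e} = m" by simp
  qed
qed


lemma modnl_1: "(b mod (int n * int l)) mod int n = b mod int n"
  by (simp add: mod_mod_cancel)

lemma mod_neg_inner: "(- (a mod (m::int) + b)) mod m = (- (a + b)) mod m"
proof -
  have "(- (a mod m + b)) mod m = (- b - a mod m) mod m" by (simp add: algebra_simps)
  also have "\<dots> = (- b - a) mod m" by (rule mod_diff_right_eq)
  also have "- b - a = - (a + b)" by simp
  finally show ?thesis .
qed

lemma mod_neg_inner3: "(- (x mod (m::int)) - c) mod m = (- x - c) mod m"
  by (metis mod_diff_left_eq mod_minus_eq)

lemma mod_neg_inner2: "(- (a + b mod (m::int))) mod m = (- (a + b)) mod m"
  using mod_neg_inner[of b m a] by (simp add: add.commute)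

lemma hact_mod_arg: "hact n h (x mod int n) = hact n h x"
  unfolding hact_def by (simp add: mod_neg_inner mod_neg_inner3 mod_add_left_eq)

lemma hact_modnl: "hact n (k mod (int n * int l), e) i = hact n (k, e) i"
proof -
  have a: "(i + k mod (int n * int l)) mod int n = (i + k) mod int n"
    by (metis mod_add_right_eq modnl_1)
  have b: "(- (i + k mod (int n * int l))) mod int n = (- (i + k)) mod int n"
    by (metis mod_neg_inner2 modnl_1)
  show ?thesis unfolding hact_def using a b by simp
qed

lemma hact_dih:
  "hact n (dih_mult n l h1 h2) i = hact n h2 (hact n h1 i)"
proof -
  obtain k1 e1 k2 e2 where h: "h1 = (k1,e1)" "h2 = (k2,e2)" by fastforce
  have "hact n (dih_mult n l h1 h2) i = hact n (k1 + (if e1 then - k2 else k2), e1 \<noteq> e2) i"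
    unfolding h dih_mult_def by (simp add: hact_modnl)
  also have "\<dots> = hact n (k2, e2) (if e1 then - (i + k1) else i + k1)"
    unfolding hact_def by (cases e1; cases e2) (simp_all add: algebra_simps)
  also have "\<dots> = hact n h2 (hact n h1 i)"
    unfolding h by (simp add: hact_def[of n "(k1,e1)"] hact_mod_arg)
  finally show ?thesis .
qed


definition sd :: "'a set \<Rightarrow> 'a set \<Rightarrow> 'a set" where "sd A B = (A - B) \<union> (B - A)"

lemma sd_comm: "sd A B = sd B A" unfolding sd_def by blast
lemma sd_assoc: "sd (sd A B) C = sd A (sd B C)" unfolding sd_def by blast
lemma sd_empty[simp]: "sd A {} = A" "sd {} A = A" unfolding sd_def by blast+
lemma sd_self[simp]: "sd A A = {}" unfolding sd_def by blast
lemma sd_cancel[simp]: "sd A (sd A B) = B" unfolding sd_def by blast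
lemma sd_eq_iff: "sd A B = C \<longleftrightarrow> B = sd A C" unfolding sd_def by blast
lemma sd_empty_iff: "sd A B = {} \<longleftrightarrow> A = B" unfolding sd_def by blast
lemma sd_subset: "A \<subseteq> X \<Longrightarrow> B \<subseteq> X \<Longrightarrow> sd A B \<subseteq> X" unfolding sd_def by blast
lemma image_sd: "inj_on f (A \<union> B) \<Longrightarrow> f ` sd A B = sd (f ` A) (f ` B)"
  unfolding sd_def inj_on_def by blast

definition hinv :: "nat \<Rightarrow> nat \<Rightarrow> int \<times> bool \<Rightarrow> int \<times> bool" where
  "hinv n l h = (if snd h then h else ((- fst h) mod (int n * int l), False))"

lemma mult_A: "(k1, e1, S1) \<otimes>\<^bsub>groupA n l\<^esub> (k2, e2, S2) =
   (fst (dih_mult n l (k1, e1) (k2, e2)), snd (dih_mult n l (k1, e1) (k2, e2)), sd (hact n (k2, e2) ` S1) S2)"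
  unfolding groupA_def sd_def by (simp add: Let_def)

lemma carrier_A: "(k, e, S) \<in> carrier (groupA n l) \<longleftrightarrow> 0 \<le> k \<and> k < int n * int l \<and> S \<subseteq> {0..<int n}"
  unfolding groupA_def by simp

lemma one_A: "\<one>\<^bsub>groupA n l\<^esub> = (0, False, {})"
  unfolding groupA_def by simp

locale setting =
  fixes n l :: nat
  assumes n3: "n \<ge> 3" and l1: "l \<ge> 1"
begin

abbreviation "M \<equiv> int n * int l"
abbreviation "A \<equiv> groupA n l"
abbreviation "dih \<equiv> dih_mult n l"
abbreviation "hi \<equiv> hinv n l"
abbreviation "ha \<equiv> hact n"

lemma Mpos: "M > 0" using n3 l1 by simp
lemma npos: "int n > 0" using n3 by simp

lemma dih_range: "0 \<le> fst (dih h1 h2) \<and> fst (dih h1 h2) < M"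
  unfolding dih_mult_def using Mpos by simp

lemma hinv_range: "0 \<le> fst (hi h) \<and> fst (hi h) < M" if "0 \<le> fst h" "fst h < M"
  unfolding hinv_def using Mpos that by simp

lemma hact_range: "0 \<le> ha h i \<and> ha h i < int n"
  unfolding hact_def using npos by simp

lemma hact_one: "ha (0, False) i = i mod int n" unfolding hact_def by simp
lemma hact_one': "0 \<le> i \<Longrightarrow> i < int n \<Longrightarrow> ha (0, False) i = i" unfolding hact_def by simp

lemma dih_one_l: "0 \<le> k \<Longrightarrow> k < M \<Longrightarrow> dih (0, False) (k, e) = (k, e)"
  unfolding dih_mult_def by simp
lemma dih_one_r: "0 \<le> k \<Longrightarrow> k < M \<Longrightarrow> dih (k, e) (0, False) = (k, e)"
  unfolding dih_mult_def by simp

lemma dih_hinv_l: "0 \<le> k \<Longrightarrow> k < M \<Longrightarrow> dih (hi (k, e)) (k, e) = (0, False)"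
proof (cases e)
  case False
  have "((- k) mod M + k) mod M = (- k + k) mod M" by (rule mod_add_left_eq)
  thus ?thesis using False unfolding dih_mult_def hinv_def by simp
qed (simp add: dih_mult_def hinv_def)

lemma dih_hinv_r: "0 \<le> k \<Longrightarrow> k < M \<Longrightarrow> dih (k, e) (hi (k, e)) = (0, False)"
proof (cases e)
  case False
  have "(k + (- k) mod M) mod M = (k + - k) mod M" by (rule mod_add_right_eq)
  thus ?thesis using False unfolding dih_mult_def hinv_def by simp
qed (simp add: dih_mult_def hinv_def)

lemma dih_assoc: "dih (dih h1 h2) h3 = dih h1 (dih h2 h3)"
proof -
  obtain k1 e1 k2 e2 k3 e3 where h: "h1 = (k1,e1)" "h2 = (k2,e2)" "h3 = (k3,e3)" by (metis prod.exhaust)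
  show ?thesis unfolding h dih_mult_def
    apply (cases e1; cases e2; cases e3)
    apply (simp_all add: mod_simps mod_neg_inner2)
    apply (simp_all add: algebra_simps)
    done
qed

lemma hact_hinv1: "0 \<le> k \<Longrightarrow> k < M \<Longrightarrow> 0 \<le> i \<Longrightarrow> i < int n \<Longrightarrow> ha (k, e) (ha (hi (k, e)) i) = i"
  using hact_dih[of n l "hi (k,e)" "(k,e)" i, symmetric] by (simp add: dih_hinv_l hact_one')

lemma hact_hinv2: "0 \<le> k \<Longrightarrow> k < M \<Longrightarrow> 0 \<le> i \<Longrightarrow> i < int n \<Longrightarrow> ha (hi (k, e)) (ha (k, e) i) = i"
  using hact_dih[of n l "(k,e)" "hi (k,e)" i, symmetric] by (simp add: dih_hinv_r hact_one')

lemma hact_inj: "0 \<le> k \<Longrightarrow> k < M \<Longrightarrow> inj_on (ha (k, e)) {0..<int n}"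
  by (rule inj_on_inverseI[where g = "ha (hi (k, e))"]) (simp add: hact_hinv2)

lemma hact_img: "ha h ` S \<subseteq> {0..<int n}"
proof
  fix x assume "x \<in> ha h ` S"
  then obtain i where "x = ha h i" by blast
  thus "x \<in> {0..<int n}" using hact_range[of h i] by simp
qed

end


context setting begin

lemma hact_img_eq: "0 \<le> k \<Longrightarrow> k < M \<Longrightarrow> S \<subseteq> {0..<int n} \<Longrightarrow> ha (k, e) ` S = ha (k, e) ` S' \<longleftrightarrow> S = S'"
  if "S' \<subseteq> {0..<int n}"
  using hact_inj[of k e] that by (metis inj_on_image_eq_iff)

lemma mult_closed: "u \<in> carrier A \<Longrightarrow> v \<in> carrier A \<Longrightarrow> u \<otimes>\<^bsub>A\<^esub> v \<in> carrier A"
proof -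
  assume u: "u \<in> carrier A" and v: "v \<in> carrier A"
  obtain k1 e1 S1 where u1: "u = (k1, e1, S1)" by (cases u) blast
  obtain k2 e2 S2 where v1: "v = (k2, e2, S2)" by (cases v) blast
  have "S2 \<subseteq> {0..<int n}" using v v1 carrier_A by blast
  hence "sd (ha (k2, e2) ` S1) S2 \<subseteq> {0..<int n}" using hact_img by (intro sd_subset) auto
  thus ?thesis unfolding u1 v1 mult_A carrier_A using dih_range by simp
qed

lemma m_assoc_A:
  assumes u: "u \<in> carrier A" and v: "v \<in> carrier A" and w: "w \<in> carrier A"
  shows "(u \<otimes>\<^bsub>A\<^esub> v) \<otimes>\<^bsub>A\<^esub> w = u \<otimes>\<^bsub>A\<^esub> (v \<otimes>\<^bsub>A\<^esub> w)"
proof -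
  obtain k1 e1 S1 where u1: "u = (k1, e1, S1)" by (cases u) blast
  obtain k2 e2 S2 where v1: "v = (k2, e2, S2)" by (cases v) blast
  obtain k3 e3 S3 where w1: "w = (k3, e3, S3)" by (cases w) blast
  have c: "0 \<le> k3" "k3 < M" "S2 \<subseteq> {0..<int n}" "S3 \<subseteq> {0..<int n}" using v w v1 w1 carrier_A by auto
  have i: "inj_on (ha (k3, e3)) (ha (k2, e2) ` S1 \<union> S2)"
    by (rule inj_on_subset[OF hact_inj[OF c(1,2), of e3]]) (use hact_img[of "(k2,e2)" S1] c(3) in blast)
  have "ha (k3, e3) ` sd (ha (k2, e2) ` S1) S2 = sd (ha (k3,e3) ` ha (k2, e2) ` S1) (ha (k3,e3) ` S2)"
    by (rule image_sd[OF i])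
  moreover have "ha (dih (k2,e2) (k3,e3)) ` S1 = ha (k3,e3) ` ha (k2, e2) ` S1"
    by (simp add: image_image hact_dih)
  ultimately show ?thesis unfolding u1 v1 w1 by (simp add: mult_A dih_assoc sd_assoc)
qed

lemma l_one_A: "u \<in> carrier A \<Longrightarrow> \<one>\<^bsub>A\<^esub> \<otimes>\<^bsub>A\<^esub> u = u"
  by (cases u) (simp add: one_A mult_A carrier_A dih_one_l)

definition invA :: "int \<times> bool \<times> int set \<Rightarrow> int \<times> bool \<times> int set" where
  "invA u = (fst (hi (fst u, fst (snd u))), snd (hi (fst u, fst (snd u))), ha (hi (fst u, fst (snd u))) ` snd (snd u))"

lemma invA_closed: "u \<in> carrier A \<Longrightarrow> invA u \<in> carrier A"
  by (cases u) (auto simp: invA_def carrier_A hinv_range hact_img)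

lemma invA_l: "u \<in> carrier A \<Longrightarrow> invA u \<otimes>\<^bsub>A\<^esub> u = \<one>\<^bsub>A\<^esub>"
proof -
  assume u: "u \<in> carrier A"
  obtain k e S where u1: "u = (k, e, S)" by (cases u) blast
  have c: "0 \<le> k" "k < M" "S \<subseteq> {0..<int n}" using u u1 carrier_A by auto
  have "ha (k,e) ` ha (hi (k,e)) ` S = S"
  proof -
    have "ha (k,e) ` ha (hi (k,e)) ` S = (\<lambda>i. i) ` S"
      unfolding image_image using c by (intro image_cong) (auto simp: hact_hinv1)
    thus ?thesis by simp
  qed
  thus ?thesis unfolding u1 invA_def by (simp add: mult_A one_A dih_hinv_l c)
qed

lemma group_A: "group A"
proof (rule groupI)
  show "\<one>\<^bsub>A\<^esub> \<in> carrier A" by (simp add: one_A carrier_A Mpos)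
qed (auto simp: mult_closed m_assoc_A l_one_A intro: invA_closed invA_l)

lemma inv_A: "u \<in> carrier A \<Longrightarrow> inv\<^bsub>A\<^esub> u = invA u"
  by (rule group.inv_equality[OF group_A invA_l _ invA_closed])

lemma prod_inv:
  assumes u: "(k1, e1, S1) \<in> carrier A" and v: "(k2, e2, S2) \<in> carrier A"
  shows "(k2, e2, S2) \<otimes>\<^bsub>A\<^esub> inv\<^bsub>A\<^esub> (k1, e1, S1) =
    (fst (dih (k2,e2) (hi (k1,e1))), snd (dih (k2,e2) (hi (k1,e1))), ha (hi (k1,e1)) ` sd S2 S1)"
proof -
  have c: "0 \<le> k1" "k1 < M" "S1 \<subseteq> {0..<int n}" "S2 \<subseteq> {0..<int n}" using u v carrier_A by auto
  obtain kk ee where hh: "hi (k1, e1) = (kk, ee)" by fastforce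
  have r: "0 \<le> kk" "kk < M" using hinv_range[of "(k1,e1)"] c hh by auto
  have "inj_on (ha (kk, ee)) (S2 \<union> S1)" by (rule inj_on_subset[OF hact_inj[OF r]]) (use c in blast)
  hence "ha (kk,ee) ` sd S2 S1 = sd (ha (kk,ee) ` S2) (ha (kk,ee) ` S1)" by (rule image_sd)
  thus ?thesis using u by (simp add: inv_A invA_def mult_A hh)
qed

end


lemma pair_sd_eq: "({S1, sd S1 {p1}} = {S2, sd S2 {p2}}) \<longleftrightarrow> p1 = p2 \<and> sd S2 S1 \<subseteq> {p1}"
proof
  assume h: "{S1, sd S1 {p1}} = {S2, sd S2 {p2}}"
  show "p1 = p2 \<and> sd S2 S1 \<subseteq> {p1}"
  proof (cases "S1 = S2")
    case True
    hence "sd S1 {p1} = sd S1 {p2}" using h by (auto simp: doubleton_eq_iff sd_def)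
    hence "{p1} = {p2}" by (metis sd_cancel)
    thus ?thesis using True by simp
  next
    case False
    hence a: "S1 = sd S2 {p2}" "sd S1 {p1} = S2" using h by (auto simp: doubleton_eq_iff)
    hence "sd (sd S2 {p2}) {p1} = S2" by simp
    hence "sd S2 (sd {p2} {p1}) = S2" by (simp add: sd_assoc)
    hence "sd {p2} {p1} = {}" by (simp add: sd_eq_iff)
    hence "p1 = p2" unfolding sd_def by blast
    moreover have "sd S2 S1 = {p2}" using a by simp
    ultimately show ?thesis by simp
  qed
next
  assume h: "p1 = p2 \<and> sd S2 S1 \<subseteq> {p1}"
  hence "sd S2 S1 = {} \<or> sd S2 S1 = {p1}" by blast
  thus "{S1, sd S1 {p1}} = {S2, sd S2 {p2}}"
  proof
    assume "sd S2 S1 = {}" thus ?thesis using h by (simp add: sd_empty_iff)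
  next
    assume "sd S2 S1 = {p1}"
    hence S1: "S1 = sd S2 {p1}" by (simp add: sd_eq_iff)
    hence "sd S1 {p1} = S2" by (simp add: sd_assoc)
    have pp: "p1 = p2" using h by blast
    have "{S1, sd S1 {p1}} = {sd S2 {p1}, S2}" using S1 \<open>sd S1 {p1} = S2\<close> by (simp only:)
    also have "\<dots> = {S2, sd S2 {p2}}" unfolding pp by (rule insert_commute)
    finally show ?thesis .
  qed
qed

lemma nat_img_inj: "A \<subseteq> {0..} \<Longrightarrow> B \<subseteq> {0..} \<Longrightarrow> nat ` A = nat ` B \<longleftrightarrow> A = B"
proof -
  assume a: "A \<subseteq> {0..}" and b: "B \<subseteq> {0..}"
  have "inj_on nat ({0..} :: int set)" by (rule inj_onI) auto
  thus ?thesis using a b by (metis inj_on_image_eq_iff)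
qed

lemma img_sub_single: "inj_on f X \<Longrightarrow> D \<subseteq> X \<Longrightarrow> x \<in> X \<Longrightarrow> f ` D \<subseteq> {f x} \<longleftrightarrow> D \<subseteq> {x}"
  unfolding inj_on_def by blast

lemma sub_single_iff: "sd S2 S1 \<subseteq> {p} \<longleftrightarrow> S1 \<in> {S2, sd S2 {p}}"
proof -
  have "sd S2 S1 \<subseteq> {p} \<longleftrightarrow> sd S2 S1 = {} \<or> sd S2 S1 = {p}" by blast
  also have "\<dots> \<longleftrightarrow> S1 = S2 \<or> S1 = sd S2 {p}" by (metis sd_empty_iff sd_eq_iff)
  finally show ?thesis by blast
qed

context setting begin

definition k0 :: "int \<times> bool \<Rightarrow> int" where "k0 h = (if snd h then (- fst h) mod M else fst h)"

definition phiV :: "int \<times> bool \<times> int set \<Rightarrow> nat set" where "phiV u = nat ` snd (snd u)"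

definition phiE :: "int \<times> bool \<times> int set \<Rightarrow> nat set set \<times> nat" where
  "phiE u = ({nat ` snd (snd u), nat ` sd (snd (snd u)) {ha (fst u, fst (snd u)) 0}},
             nat (k0 (fst u, fst (snd u)) div int n))"

definition Hset :: "(int \<times> bool \<times> int set) set" where "Hset = {(k, e, S). 0 \<le> k \<and> k < M \<and> S = {}}"
definition Jset :: "(int \<times> bool \<times> int set) set" where "Jset = {(k, e, S). k = 0 \<and> S \<subseteq> {0}}"
definition JH :: "(int \<times> bool \<times> int set) set" where "JH = {(k, e, S). (k,e,S) \<in> carrier A \<and> S \<subseteq> {ha (k,e) 0}}"

lemma k0_range: "0 \<le> k \<Longrightarrow> k < M \<Longrightarrow> 0 \<le> k0 (k, e) \<and> k0 (k, e) < M"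
  unfolding k0_def using Mpos by simp

lemma pp_k0: "ha (k, e) 0 = k0 (k, e) mod int n"
  unfolding hact_def k0_def by (simp add: modnl_1)

lemma mod_diff0: "0 \<le> a \<Longrightarrow> a < M \<Longrightarrow> 0 \<le> b \<Longrightarrow> b < M \<Longrightarrow> (a - b) mod M = 0 \<longleftrightarrow> a = b"
proof -
  assume r: "0 \<le> a" "a < M" "0 \<le> b" "b < M"
  have "(a - b) mod M = 0 \<longleftrightarrow> a mod M = b mod M" by (simp add: mod_eq_dvd_iff dvd_eq_mod_eq_0)
  thus ?thesis using r by simp
qed

lemma mod_sum0: "0 \<le> a \<Longrightarrow> a < M \<Longrightarrow> (a + b) mod M = 0 \<longleftrightarrow> a = (- b) mod M"
proof -
  assume r: "0 \<le> a" "a < M"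
  have "(a + b) mod M = 0 \<longleftrightarrow> a mod M = (- b) mod M" by (simp add: mod_eq_dvd_iff dvd_eq_mod_eq_0)
  thus ?thesis using r by simp
qed

lemma mod_neg_eq: "0 \<le> a \<Longrightarrow> a < M \<Longrightarrow> 0 \<le> b \<Longrightarrow> b < M \<Longrightarrow> (- a) mod M = (- b) mod M \<longleftrightarrow> a = b"
proof -
  assume r: "0 \<le> a" "a < M" "0 \<le> b" "b < M"
  have "(- a) mod M = (- b) mod M \<longleftrightarrow> M dvd (b - a)" by (simp add: mod_eq_dvd_iff)
  also have "\<dots> \<longleftrightarrow> M dvd (a - b)" by (simp add: dvd_diff_commute)
  also have "\<dots> \<longleftrightarrow> a mod M = b mod M" by (simp add: mod_eq_dvd_iff)
  finally show ?thesis using r by simp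
qed

lemma k0_eq:
  assumes "0 \<le> k1" "k1 < M" "0 \<le> k2" "k2 < M"
  shows "fst (dih (k2, e2) (hi (k1, e1))) = 0 \<longleftrightarrow> k0 (k1, e1) = k0 (k2, e2)"
proof (cases e1; cases e2)
  assume "e1" "e2"
  thus ?thesis using assms by (simp add: dih_mult_def hinv_def k0_def mod_diff0 mod_diff0[of k2 k1] mod_neg_eq; blast)
next
  assume "e1" "\<not> e2"
  thus ?thesis using assms mod_sum0[of k2 k1] by (simp add: dih_mult_def hinv_def k0_def add.commute; blast)
next
  assume "\<not> e1" "e2"
  hence "fst (dih (k2, e2) (hi (k1, e1))) = (k2 + k1) mod M"
    by (simp add: dih_mult_def hinv_def mod_simps)
  thus ?thesis using assms mod_sum0[of k1 k2] \<open>\<not> e1\<close> \<open>e2\<close> by (simp add: k0_def add.commute; blast)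
next
  assume "\<not> e1" "\<not> e2"
  hence "fst (dih (k2, e2) (hi (k1, e1))) = (k2 - k1) mod M"
    by (simp add: dih_mult_def hinv_def mod_simps)
  thus ?thesis using assms mod_diff0[of k2 k1] \<open>\<not> e1\<close> \<open>\<not> e2\<close> by (auto simp: k0_def)
qed

end


lemma pair_img_eq: "inj_on f X \<Longrightarrow> A \<in> X \<Longrightarrow> B \<in> X \<Longrightarrow> C \<in> X \<Longrightarrow> D \<in> X \<Longrightarrow>
   {f A, f B} = {f C, f D} \<longleftrightarrow> {A, B} = {C, D}"
  unfolding doubleton_eq_iff inj_on_def by blast

lemma nat_img_inj': "inj_on (\<lambda>S. nat ` S) (Pow {0::int..})"
  by (rule inj_onI) (simp add: nat_img_inj)

context setting begin

lemma in_Hset: "(k, e, S) \<in> Hset \<longleftrightarrow> 0 \<le> k \<and> k < M \<and> S = {}" unfolding Hset_def by simp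
lemma in_Jset: "(k, e, S) \<in> Jset \<longleftrightarrow> k = 0 \<and> S \<subseteq> {0}" unfolding Jset_def by simp
lemma in_JH: "(k, e, S) \<in> JH \<longleftrightarrow> (k,e,S) \<in> carrier A \<and> S \<subseteq> {ha (k,e) 0}" unfolding JH_def by simp

lemma eqV_A:
  assumes u: "u \<in> carrier A" and v: "v \<in> carrier A"
  shows "v \<otimes>\<^bsub>A\<^esub> inv\<^bsub>A\<^esub> u \<in> Hset \<longleftrightarrow> phiV u = phiV v"
proof -
  obtain k1 e1 S1 where u1: "u = (k1, e1, S1)" by (cases u) blast
  obtain k2 e2 S2 where v1: "v = (k2, e2, S2)" by (cases v) blast
  have c: "S1 \<subseteq> {0..<int n}" "S2 \<subseteq> {0..<int n}" using u v u1 v1 carrier_A by auto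
  have "v \<otimes>\<^bsub>A\<^esub> inv\<^bsub>A\<^esub> u \<in> Hset \<longleftrightarrow> sd S2 S1 = {}"
    using u v unfolding u1 v1 by (simp add: prod_inv in_Hset dih_range)
  also have "\<dots> \<longleftrightarrow> S1 = S2" by (auto simp: sd_empty_iff)
  also have "\<dots> \<longleftrightarrow> nat ` S1 = nat ` S2" using c by (intro nat_img_inj[symmetric]) auto
  finally show ?thesis unfolding u1 v1 phiV_def by simp
qed

lemma hinv_pair: "\<exists>kk ee. hi (k, e) = (kk, ee) \<and> 0 \<le> kk \<and> kk < M" if "0 \<le> k" "k < M"
  using hinv_range[of "(k,e)"] that by (metis prod.collapse fst_conv)

lemma img_hinv_sub:
  assumes r: "0 \<le> k" "k < M" and D: "D \<subseteq> {0..<int n}" and x: "0 \<le> x" "x < int n"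
  shows "ha (hi (k, e)) ` D \<subseteq> {ha (hi (k, e)) x} \<longleftrightarrow> D \<subseteq> {x}"
proof -
  obtain kk ee where hh: "hi (k, e) = (kk, ee)" "0 \<le> kk" "kk < M" using hinv_pair[OF r] by blast
  show ?thesis unfolding hh(1) by (rule img_sub_single[OF hact_inj[OF hh(2,3)] D]) (use x in simp)
qed

lemma eqE_A:
  assumes u: "u \<in> carrier A" and v: "v \<in> carrier A"
  shows "v \<otimes>\<^bsub>A\<^esub> inv\<^bsub>A\<^esub> u \<in> Jset \<longleftrightarrow> phiE u = phiE v"
proof -
  obtain k1 e1 S1 where u1: "u = (k1, e1, S1)" by (cases u) blast
  obtain k2 e2 S2 where v1: "v = (k2, e2, S2)" by (cases v) blast
  have c: "0 \<le> k1" "k1 < M" "0 \<le> k2" "k2 < M" "S1 \<subseteq> {0..<int n}" "S2 \<subseteq> {0..<int n}"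
    using u v u1 v1 carrier_A by auto
  define p1 where "p1 = ha (k1, e1) 0"
  define p2 where "p2 = ha (k2, e2) 0"
  have p1r: "0 \<le> p1" "p1 < int n" using hact_range p1_def by auto
  have p2r: "0 \<le> p2" "p2 < int n" using hact_range p2_def by auto
  have D: "sd S2 S1 \<subseteq> {0..<int n}" using c by (intro sd_subset)
  have z: "ha (hi (k1, e1)) p1 = 0" unfolding p1_def using hact_hinv2[OF c(1,2), of 0 e1] npos by simp
  have "v \<otimes>\<^bsub>A\<^esub> inv\<^bsub>A\<^esub> u \<in> Jset \<longleftrightarrow>
        fst (dih (k2, e2) (hi (k1, e1))) = 0 \<and> ha (hi (k1,e1)) ` sd S2 S1 \<subseteq> {0}"
    using u v unfolding u1 v1 by (simp add: prod_inv in_Jset)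
  also have "\<dots> \<longleftrightarrow> k0 (k1, e1) = k0 (k2, e2) \<and> sd S2 S1 \<subseteq> {p1}"
    using k0_eq[OF c(1-4)] img_hinv_sub[OF c(1,2) D p1r, of e1] z by simp
  also have "\<dots> \<longleftrightarrow> (p1 = p2 \<and> sd S2 S1 \<subseteq> {p1}) \<and> k0 (k1, e1) div int n = k0 (k2, e2) div int n"
  proof -
    have "k0 (k1, e1) = k0 (k2, e2) \<longleftrightarrow> k0 (k1, e1) mod int n = k0 (k2, e2) mod int n \<and> k0 (k1, e1) div int n = k0 (k2, e2) div int n"
      by (metis div_mult_mod_eq)
    thus ?thesis unfolding p1_def p2_def pp_k0 by blast
  qed
  also have "\<dots> \<longleftrightarrow> {S1, sd S1 {p1}} = {S2, sd S2 {p2}} \<and> nat (k0 (k1, e1) div int n) = nat (k0 (k2, e2) div int n)"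
  proof -
    have "0 \<le> k0 (k1, e1) div int n" "0 \<le> k0 (k2, e2) div int n"
      using k0_range[OF c(1,2), of e1] k0_range[OF c(3,4), of e2] npos by (simp_all add: pos_imp_zdiv_nonneg_iff)
    hence "nat (k0 (k1, e1) div int n) = nat (k0 (k2, e2) div int n) \<longleftrightarrow> k0 (k1, e1) div int n = k0 (k2, e2) div int n"
      by (rule eq_nat_nat_iff)
    thus ?thesis using pair_sd_eq[of S1 p1 S2 p2] by simp
  qed
  also have "{S1, sd S1 {p1}} = {S2, sd S2 {p2}} \<longleftrightarrow> {nat ` S1, nat ` sd S1 {p1}} = {nat ` S2, nat ` sd S2 {p2}}"
  proof -
    have "sd S1 {p1} \<subseteq> {0..<int n}" by (intro sd_subset) (use c p1r in auto)
    moreover have "sd S2 {p2} \<subseteq> {0..<int n}" by (intro sd_subset) (use c p2r in auto)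
    ultimately have "S1 \<in> Pow {0..}" "sd S1 {p1} \<in> Pow {0..}" "S2 \<in> Pow {0..}" "sd S2 {p2} \<in> Pow {0..}" using c by auto
    from pair_img_eq[OF nat_img_inj' this] show ?thesis by simp
  qed
  finally show ?thesis unfolding u1 v1 phiE_def p1_def p2_def by simp
qed

lemma inc_A:
  assumes u: "u \<in> carrier A" and v: "v \<in> carrier A"
  shows "v \<otimes>\<^bsub>A\<^esub> inv\<^bsub>A\<^esub> u \<in> JH \<longleftrightarrow> phiV u \<in> fst (phiE v)"
proof -
  obtain k1 e1 S1 where u1: "u = (k1, e1, S1)" by (cases u) blast
  obtain k2 e2 S2 where v1: "v = (k2, e2, S2)" by (cases v) blast
  have c: "0 \<le> k1" "k1 < M" "0 \<le> k2" "k2 < M" "S1 \<subseteq> {0..<int n}" "S2 \<subseteq> {0..<int n}"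
    using u v u1 v1 carrier_A by auto
  define p2 where "p2 = ha (k2, e2) 0"
  have p2r: "0 \<le> p2" "p2 < int n" using hact_range p2_def by auto
  have D: "sd S2 S1 \<subseteq> {0..<int n}" using c by (intro sd_subset)
  have vu: "v \<otimes>\<^bsub>A\<^esub> inv\<^bsub>A\<^esub> u \<in> carrier A"
    using u v group.inv_closed[OF group_A] mult_closed by simp
  have "v \<otimes>\<^bsub>A\<^esub> inv\<^bsub>A\<^esub> u \<in> JH \<longleftrightarrow>
        ha (hi (k1,e1)) ` sd S2 S1 \<subseteq> {ha (dih (k2, e2) (hi (k1, e1))) 0}"
    using u v vu unfolding u1 v1 by (simp add: prod_inv in_JH)
  also have "ha (dih (k2, e2) (hi (k1, e1))) 0 = ha (hi (k1, e1)) p2"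
    unfolding p2_def by (simp add: hact_dih)
  also have "ha (hi (k1,e1)) ` sd S2 S1 \<subseteq> {ha (hi (k1, e1)) p2} \<longleftrightarrow> sd S2 S1 \<subseteq> {p2}"
    by (rule img_hinv_sub[OF c(1,2) D p2r])
  also have "\<dots> \<longleftrightarrow> S1 \<in> {S2, sd S2 {p2}}" by (rule sub_single_iff)
  also have "\<dots> \<longleftrightarrow> nat ` S1 \<in> {nat ` S2, nat ` sd S2 {p2}}"
  proof -
    have "sd S2 {p2} \<subseteq> {0..<int n}" by (intro sd_subset) (use c p2r in auto)
    hence "S1 \<in> Pow {0..}" "S2 \<in> Pow {0..}" "sd S2 {p2} \<in> Pow {0..}" using c by auto
    thus ?thesis using nat_img_inj' unfolding inj_on_def by blast
  qed
  finally show ?thesis unfolding u1 v1 phiE_def phiV_def p2_def by simp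
qed

end


abbreviation "Qn n l \<equiv> hypercube_mult n l"

lemma verts_Q: "verts (hypercube_mult n l) = Pow {..<n}" unfolding hypercube_mult_def by simp
lemma inc_Q: "inc (hypercube_mult n l) v e \<longleftrightarrow> v \<in> fst e" unfolding hypercube_mult_def by simp
lemma edges_Q: "edges (hypercube_mult n l) = {({S, T}, j) | S T j. S \<subseteq> {..<n} \<and> T \<subseteq> {..<n} \<and> card (sd S T) = 1 \<and> j < l}"
  unfolding hypercube_mult_def sd_def by simp

lemma set_mult_upd: "H <#>\<^bsub>G\<lparr>carrier := K\<rparr>\<^esub> J = H <#>\<^bsub>G\<^esub> J"
  unfolding set_mult_def by simp

context setting begin

lemma iso_sub:
  assumes K: "subgroup K A" and sHk: "subgroup Hk A" and sJk: "subgroup Jk A"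
    and HK: "Hk = Hset \<inter> K" and JK: "Jk = Jset \<inter> K" and JHK: "Jk <#>\<^bsub>A\<^esub> Hk = JH \<inter> K"
    and sV: "phiV ` K = verts (Qn n l)" and sE: "phiE ` K = edges (Qn n l)"
  shows "incgraph_iso (Qn n l) (cos_graph (A\<lparr>carrier := K\<rparr>) Hk Jk)"
proof -
  interpret A: group A by (rule group_A)
  let ?G = "A\<lparr>carrier := K\<rparr>"
  have G: "group ?G" by (rule subgroup.subgroup_is_group[OF K group_A])
  have Kc: "K \<subseteq> carrier A" using K subgroup.subset by blast
  have inv: "inv\<^bsub>?G\<^esub> u = inv\<^bsub>A\<^esub> u" if "u \<in> K" for u using A.m_inv_consistent[OF K that] .
  have cl: "v \<otimes>\<^bsub>A\<^esub> inv\<^bsub>A\<^esub> u \<in> K" if "u \<in> K" "v \<in> K" for u v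
    using K that by (simp add: subgroup.m_closed subgroup.m_inv_closed)
  show ?thesis
  proof (rule iso_labels[where phiV = phiV and phiE = phiE])
    show "group ?G" by (rule G)
    show "subgroup Hk ?G" using A.subgroup_incl[OF sHk K] HK by blast
    show "subgroup Jk ?G" using A.subgroup_incl[OF sJk K] JK by blast
    show "phiV ` carrier ?G = verts (Qn n l)" using sV by simp
    show "phiE ` carrier ?G = edges (Qn n l)" using sE by simp
  next
    fix u u' assume "u \<in> carrier ?G" "u' \<in> carrier ?G"
    hence u: "u \<in> K" and u': "u' \<in> K" by simp_all
    have "u' \<otimes>\<^bsub>?G\<^esub> inv\<^bsub>?G\<^esub> u \<in> Hk \<longleftrightarrow> u' \<otimes>\<^bsub>A\<^esub> inv\<^bsub>A\<^esub> u \<in> Hset"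
      using inv[OF u] cl[OF u u'] HK by simp
    also have "\<dots> \<longleftrightarrow> phiV u = phiV u'" using eqV_A u u' Kc by blast
    finally show "u' \<otimes>\<^bsub>?G\<^esub> inv\<^bsub>?G\<^esub> u \<in> Hk \<longleftrightarrow> phiV u = phiV u'" .
  next
    fix u u' assume "u \<in> carrier ?G" "u' \<in> carrier ?G"
    hence u: "u \<in> K" and u': "u' \<in> K" by simp_all
    have "u' \<otimes>\<^bsub>?G\<^esub> inv\<^bsub>?G\<^esub> u \<in> Jk \<longleftrightarrow> u' \<otimes>\<^bsub>A\<^esub> inv\<^bsub>A\<^esub> u \<in> Jset"
      using inv[OF u] cl[OF u u'] JK by simp
    also have "\<dots> \<longleftrightarrow> phiE u = phiE u'" using eqE_A u u' Kc by blast
    finally show "u' \<otimes>\<^bsub>?G\<^esub> inv\<^bsub>?G\<^esub> u \<in> Jk \<longleftrightarrow> phiE u = phiE u'" .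
  next
    fix u v assume "u \<in> carrier ?G" "v \<in> carrier ?G"
    hence u: "u \<in> K" and v: "v \<in> K" by simp_all
    have "v \<otimes>\<^bsub>?G\<^esub> inv\<^bsub>?G\<^esub> u \<in> Jk <#>\<^bsub>?G\<^esub> Hk \<longleftrightarrow> v \<otimes>\<^bsub>A\<^esub> inv\<^bsub>A\<^esub> u \<in> JH"
      using inv[OF u] cl[OF u v] JHK by (simp add: set_mult_upd)
    also have "\<dots> \<longleftrightarrow> phiV u \<in> fst (phiE v)" using inc_A u v Kc by blast
    finally show "v \<otimes>\<^bsub>?G\<^esub> inv\<^bsub>?G\<^esub> u \<in> Jk <#>\<^bsub>?G\<^esub> Hk \<longleftrightarrow> inc (Qn n l) (phiV u) (phiE v)"
      by (simp add: inc_Q)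
  qed
qed

lemma nat_img_sub: "S \<subseteq> {0..<int n} \<Longrightarrow> nat ` S \<subseteq> {..<n}"
proof
  fix y assume "S \<subseteq> {0..<int n}" "y \<in> nat ` S"
  then obtain x where "x \<in> S" "y = nat x" by blast
  hence "0 \<le> x" "x < int n" using \<open>S \<subseteq> {0..<int n}\<close> by auto
  thus "y \<in> {..<n}" using \<open>y = nat x\<close> by simp
qed

lemma phiV_sub: "u \<in> carrier A \<Longrightarrow> phiV u \<in> Pow {..<n}"
proof -
  assume u: "u \<in> carrier A"
  obtain k e S where u1: "u = (k, e, S)" by (cases u) blast
  have "S \<subseteq> {0..<int n}" using u u1 carrier_A by auto
  thus ?thesis unfolding u1 phiV_def using nat_img_sub by auto
qed

lemma phiV_witness: "T \<subseteq> {..<n} \<Longrightarrow> 0 \<le> k \<Longrightarrow> k < M \<Longrightarrow> (k, e, int ` T) \<in> carrier A \<and> phiV (k, e, int ` T) = T"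
  unfolding phiV_def carrier_A by (auto simp: image_image)

lemma nat_sd: "X \<subseteq> {0..} \<Longrightarrow> Y \<subseteq> {0..} \<Longrightarrow> nat ` sd X Y = sd (nat ` X) (nat ` Y)"
proof -
  assume xy: "X \<subseteq> {0..}" "Y \<subseteq> {0..}"
  have inj0: "inj_on nat ({0..} :: int set)" by (rule inj_onI) auto
  have "inj_on nat (X \<union> Y)" by (rule inj_on_subset[OF inj0]) (use xy in blast)
  thus ?thesis by (rule image_sd)
qed

lemma phiE_sub: "u \<in> carrier A \<Longrightarrow> phiE u \<in> edges (Qn n l)"
proof -
  assume u: "u \<in> carrier A"
  obtain k e S where u1: "u = (k, e, S)" by (cases u) blast
  have c: "0 \<le> k" "k < M" "S \<subseteq> {0..<int n}" using u u1 carrier_A by auto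
  define p where "p = ha (k, e) 0"
  have pr: "0 \<le> p" "p < int n" using hact_range p_def by auto
  have sdr: "sd S {p} \<subseteq> {0..<int n}" by (intro sd_subset) (use c pr in auto)
  have "nat ` S \<subseteq> {..<n}" using c nat_img_sub by auto
  moreover have "nat ` sd S {p} \<subseteq> {..<n}" using sdr nat_img_sub by auto
  moreover have "sd (nat ` S) (nat ` sd S {p}) = {nat p}"
  proof -
    have "sd (nat ` S) (nat ` sd S {p}) = nat ` sd S (sd S {p})" using c sdr by (intro nat_sd[symmetric]) auto
    thus ?thesis by simp
  qed
  moreover have "nat (k0 (k, e) div int n) < l"
  proof -
    have "k0 (k, e) < int n * int l" "0 \<le> k0 (k, e)" using k0_range[OF c(1,2)] by auto
    hence "k0 (k, e) div int n < int l" using npos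
      by (smt (verit) minus_mod_eq_mult_div mult_left_less_imp_less pos_mod_sign)
    moreover have "0 \<le> k0 (k, e) div int n" using k0_range[OF c(1,2), of e] npos by (simp add: pos_imp_zdiv_nonneg_iff)
    ultimately show ?thesis by (simp add: nat_less_iff)
  qed
  moreover have "card {nat p} = 1" by simp
  ultimately have "({nat ` S, nat ` sd S {p}}, nat (k0 (k, e) div int n)) \<in> edges (Qn n l)"
    unfolding edges_Q by (metis (mono_tags, lifting) mem_Collect_eq)
  thus ?thesis unfolding u1 phiE_def p_def by simp
qed

lemma phiE_witness:
  fixes e :: bool
  assumes T: "S \<subseteq> {..<n}" and i: "i < n" and j: "j < l"
  defines "kk \<equiv> int n * int j + int i"
  defines "w \<equiv> (if e then (- kk) mod M else kk, e, int ` S)"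
  shows "w \<in> carrier A \<and> phiE w = ({S, sd S {i}}, j)"
proof -
  have kr: "0 \<le> kk" "kk < M"
  proof -
    show "0 \<le> kk" unfolding kk_def by simp
    have "int j + 1 \<le> int l" using j by simp
    hence "int n * (int j + 1) \<le> int n * int l" by (intro mult_left_mono) auto
    thus "kk < M" unfolding kk_def using i by (simp add: algebra_simps)
  qed
  have k0w: "k0 (fst w, fst (snd w)) = kk"
    unfolding w_def k0_def using kr by (cases e) (simp_all add: mod_minus_eq)
  have wc: "w \<in> carrier A" unfolding w_def carrier_A using kr T Mpos by auto
  have dm: "kk div int n = int j" "kk mod int n = int i" unfolding kk_def using i npos by auto
  have p: "ha (fst w, fst (snd w)) 0 = int i"
  proof -
    obtain kw ew Sw where w3: "w = (kw, ew, Sw)" by (cases w) blast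
    show ?thesis using pp_k0[of kw ew] k0w dm w3 by simp
  qed
  have "nat ` sd (int ` S) {int i} = sd S {i}"
  proof -
    have "nat ` sd (int ` S) {int i} = sd (nat ` int ` S) (nat ` {int i})" by (rule nat_sd) auto
    thus ?thesis by (simp add: image_image)
  qed
  hence "phiE w = ({S, sd S {i}}, j)"
    unfolding phiE_def using k0w dm p by (simp add: w_def image_image)
  thus ?thesis using wc by simp
qed

lemma phiE_sup: "e \<in> edges (Qn n l) \<Longrightarrow> \<exists>S i j. S \<subseteq> {..<n} \<and> i < n \<and> j < l \<and> e = ({S, sd S {i}}, j)"
proof -
  assume "e \<in> edges (Qn n l)"
  then obtain S T j where e: "e = ({S, T}, j)" and c: "S \<subseteq> {..<n}" "T \<subseteq> {..<n}" "card (sd S T) = 1" "j < l"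
    unfolding edges_Q by blast
  obtain i where i: "sd S T = {i}" using c(3) card_1_singletonE by blast
  have "i < n" using i c(1,2) unfolding sd_def by blast
  moreover have "T = sd S {i}" using i by (simp add: sd_eq_iff)
  ultimately show ?thesis using c e by blast
qed

end


lemma card_sd_parity: "finite X \<Longrightarrow> finite Y \<Longrightarrow> odd (card (sd X Y)) \<longleftrightarrow> (odd (card X) \<noteq> odd (card Y))"
proof -
  assume f: "finite X" "finite Y"
  have e: "sd X Y = (X \<union> Y) - (X \<inter> Y)" unfolding sd_def by blast
  have "card (sd X Y) = card (X \<union> Y) - card (X \<inter> Y)" unfolding e using f by (intro card_Diff_subset) auto
  moreover have "card (X \<inter> Y) \<le> card (X \<union> Y)" using f by (intro card_mono) auto
  moreover have "card X + card Y = card (X \<union> Y) + card (X \<inter> Y)" using f by (rule card_Un_Int)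
  ultimately have "card (sd X Y) + 2 * card (X \<inter> Y) = card X + card Y" by simp
  hence "odd (card (sd X Y)) \<longleftrightarrow> odd (card X + card Y)" by (metis even_add even_mult_iff even_numeral)
  thus ?thesis by simp
qed

context setting begin

definition Xset :: "(int \<times> bool \<times> int set) set" where "Xset = {(k, e, S). (k, e, S) \<in> carrier A \<and> \<not> e}"
definition Yset :: "(int \<times> bool \<times> int set) set" where
  "Yset = {(k, e, S). (k, e, S) \<in> carrier A \<and> (odd (card S) \<longleftrightarrow> e)}"

lemma in_Xset: "(k, e, S) \<in> Xset \<longleftrightarrow> (k, e, S) \<in> carrier A \<and> \<not> e" unfolding Xset_def by simp
lemma in_Yset: "(k, e, S) \<in> Yset \<longleftrightarrow> (k, e, S) \<in> carrier A \<and> (odd (card S) \<longleftrightarrow> e)" unfolding Yset_def by simp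

lemma subgroupA_I:
  assumes "K \<subseteq> carrier A" "\<one>\<^bsub>A\<^esub> \<in> K" "\<And>u. u \<in> K \<Longrightarrow> invA u \<in> K"
    "\<And>u v. u \<in> K \<Longrightarrow> v \<in> K \<Longrightarrow> u \<otimes>\<^bsub>A\<^esub> v \<in> K"
  shows "subgroup K A"
proof (rule group.subgroupI[OF group_A])
  show "K \<subseteq> carrier A" "K \<noteq> {}" using assms by auto
  show "\<And>u. u \<in> K \<Longrightarrow> inv\<^bsub>A\<^esub> u \<in> K" using assms inv_A by auto
  show "\<And>u v. u \<in> K \<Longrightarrow> v \<in> K \<Longrightarrow> u \<otimes>\<^bsub>A\<^esub> v \<in> K" by fact
qed

lemma hact0: "ha (0, e) 0 = 0" unfolding hact_def by simp

lemma sub_Hset: "subgroup Hset A"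
proof (rule subgroupA_I)
  show "Hset \<subseteq> carrier A" unfolding Hset_def by (auto simp: carrier_A)
  show "\<one>\<^bsub>A\<^esub> \<in> Hset" by (simp add: one_A in_Hset Mpos)
next
  fix u assume "u \<in> Hset"
  then obtain k e where u: "u = (k, e, {})" "0 \<le> k" "k < M" unfolding Hset_def by auto
  show "invA u \<in> Hset" unfolding u invA_def in_Hset using hinv_range[of "(k,e)"] u by simp
next
  fix u v assume "u \<in> Hset" "v \<in> Hset"
  then obtain k1 e1 k2 e2 where "u = (k1, e1, {})" "v = (k2, e2, {})" unfolding Hset_def by auto
  thus "u \<otimes>\<^bsub>A\<^esub> v \<in> Hset" by (simp add: mult_A in_Hset dih_range)
qed

lemma sub_Jset: "subgroup Jset A"
proof (rule subgroupA_I)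
  show "Jset \<subseteq> carrier A" unfolding Jset_def using Mpos npos by (auto simp: carrier_A subset_iff)
  show "\<one>\<^bsub>A\<^esub> \<in> Jset" by (simp add: one_A in_Jset)
next
  fix u assume "u \<in> Jset"
  then obtain e S where u: "u = (0, e, S)" "S \<subseteq> {0}" unfolding Jset_def by auto
  have "hi (0, e) = (0, e)" unfolding hinv_def by simp
  thus "invA u \<in> Jset" unfolding u invA_def in_Jset using u hact0 by auto
next
  fix u v assume "u \<in> Jset" "v \<in> Jset"
  then obtain e1 S1 e2 S2 where uv: "u = (0, e1, S1)" "v = (0, e2, S2)" "S1 \<subseteq> {0}" "S2 \<subseteq> {0}"
    unfolding Jset_def by auto
  have "sd (ha (0, e2) ` S1) S2 \<subseteq> {0}" using uv hact0 by (intro sd_subset) auto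
  thus "u \<otimes>\<^bsub>A\<^esub> v \<in> Jset" unfolding uv by (simp add: mult_A in_Jset dih_mult_def)
qed

lemma sub_Xset: "subgroup Xset A"
proof (rule subgroupA_I)
  show "Xset \<subseteq> carrier A" unfolding Xset_def by auto
  show "\<one>\<^bsub>A\<^esub> \<in> Xset" by (simp add: one_A in_Xset carrier_A Mpos)
next
  fix u assume u: "u \<in> Xset"
  then obtain k S where u1: "u = (k, False, S)" unfolding Xset_def by auto
  have "invA u \<in> carrier A" using u invA_closed unfolding Xset_def by auto
  thus "invA u \<in> Xset" unfolding u1 by (simp add: invA_def hinv_def Xset_def)
next
  fix u v assume uv: "u \<in> Xset" "v \<in> Xset"
  then obtain k1 S1 k2 S2 where u1: "u = (k1, False, S1)" "v = (k2, False, S2)" unfolding Xset_def by auto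
  have "u \<otimes>\<^bsub>A\<^esub> v \<in> carrier A" using uv mult_closed unfolding Xset_def by auto
  thus "u \<otimes>\<^bsub>A\<^esub> v \<in> Xset" unfolding u1 by (simp add: mult_A dih_mult_def Xset_def)
qed

lemma card_hact: "0 \<le> k \<Longrightarrow> k < M \<Longrightarrow> S \<subseteq> {0..<int n} \<Longrightarrow> card (ha (k, e) ` S) = card S"
  by (rule card_image, rule inj_on_subset[OF hact_inj]) auto

lemma sub_Yset: "subgroup Yset A"
proof (rule subgroupA_I)
  show "Yset \<subseteq> carrier A" unfolding Yset_def by auto
  show "\<one>\<^bsub>A\<^esub> \<in> Yset" by (simp add: one_A in_Yset carrier_A Mpos)
next
  fix u assume u: "u \<in> Yset"
  then obtain k e S where u1: "u = (k, e, S)" and c: "0 \<le> k" "k < M" "S \<subseteq> {0..<int n}" "odd (card S) \<longleftrightarrow> e"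
    unfolding Yset_def carrier_A by auto
  obtain kk ee where hh: "hi (k, e) = (kk, ee)" "0 \<le> kk" "kk < M" using hinv_pair[OF c(1,2)] by blast
  have ee: "ee = e" using hh(1) unfolding hinv_def by (cases e) auto
  have "invA u \<in> carrier A" using u invA_closed unfolding Yset_def by auto
  moreover have "card (ha (kk, ee) ` S) = card S" using card_hact[OF hh(2,3) c(3)] .
  ultimately show "invA u \<in> Yset" unfolding u1 using c ee by (simp add: invA_def hh in_Yset)
next
  fix u v assume uv: "u \<in> Yset" "v \<in> Yset"
  then obtain k1 e1 S1 k2 e2 S2 where u1: "u = (k1, e1, S1)" "v = (k2, e2, S2)"
    and c: "0 \<le> k2" "k2 < M" "S1 \<subseteq> {0..<int n}" "S2 \<subseteq> {0..<int n}" "odd (card S1) \<longleftrightarrow> e1" "odd (card S2) \<longleftrightarrow> e2"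
    unfolding Yset_def carrier_A by auto
  have "u \<otimes>\<^bsub>A\<^esub> v \<in> carrier A" using uv mult_closed unfolding Yset_def by auto
  moreover have "finite S1" "finite S2" using c finite_subset by auto
  moreover have "card (ha (k2, e2) ` S1) = card S1" using card_hact[OF c(1,2,3)] .
  ultimately show "u \<otimes>\<^bsub>A\<^esub> v \<in> Yset" unfolding u1 using c
    by (simp add: mult_A dih_mult_def in_Yset card_sd_parity)
qed

end


context setting begin

abbreviation "ea \<equiv> (1::int, False, {}::int set)"
abbreviation "ex \<equiv> (0::int, True, {}::int set)"
abbreviation "ez \<equiv> (0::int, False, {0::int})"
abbreviation "ezx \<equiv> (0::int, True, {0::int})"

lemma n_le_M: "int n \<le> M"
proof -
  have "int n * 1 \<le> int n * int l" using l1 by (intro mult_left_mono) auto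
  thus ?thesis by simp
qed

lemma M3: "M \<ge> 3"
proof -
  have "int n \<ge> 3" using n3 by simp
  thus ?thesis using n_le_M by linarith
qed

lemma elem_a_eq: "elem_a n l = ea" unfolding elem_a_def using M3 by simp

lemma y_eq: "ea \<otimes>\<^bsub>A\<^esub> ex = (1, True, {})" using M3 by (simp add: mult_A dih_mult_def)
lemma yx_eq: "(1, True, {}) \<otimes>\<^bsub>A\<^esub> ex = ea" using M3 by (simp add: mult_A dih_mult_def)
lemma zx_eq: "ez \<otimes>\<^bsub>A\<^esub> ex = ezx" by (simp add: mult_A dih_mult_def hact_def)

lemma ea_c: "ea \<in> carrier A" using M3 by (simp add: carrier_A)
lemma ex_c: "ex \<in> carrier A" using M3 by (simp add: carrier_A)
lemma ez_c: "ez \<in> carrier A" using M3 npos by (simp add: carrier_A)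
lemma ezx_c: "ezx \<in> carrier A" using M3 npos by (simp add: carrier_A)

lemma gen_pow:
  assumes a: "ea \<in> generate A X" and k: "0 \<le> k" "k < M"
  shows "(k, False, {}) \<in> generate A X"
proof -
  have "\<forall>t::nat. int t < M \<longrightarrow> (int t, False, {}) \<in> generate A X"
  proof
    fix t :: nat show "int t < M \<longrightarrow> (int t, False, {}) \<in> generate A X"
    proof (induction t)
      case 0 show ?case using generate.one[of A X] by (simp add: one_A)
    next
      case (Suc t)
      show ?case
      proof
        assume lt: "int (Suc t) < M"
        hence "(int t, False, {}) \<in> generate A X" using Suc by simp
        hence "(int t, False, {}) \<otimes>\<^bsub>A\<^esub> ea \<in> generate A X" using a by (rule generate.eng)
        moreover have "(int t, False, {}) \<otimes>\<^bsub>A\<^esub> ea = (int (Suc t), False, {})"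
          using lt by (simp add: mult_A dih_mult_def)
        ultimately show "(int (Suc t), False, {}) \<in> generate A X" by simp
      qed
    qed
  qed
  thus ?thesis using k by (metis int_nat_eq)
qed

lemma gen_T:
  assumes a: "ea \<in> generate A X" and x: "ex \<in> generate A X" and k: "0 \<le> k" "k < M"
  shows "(k, True, {}) \<in> generate A X"
proof -
  have "(k, False, {}) \<otimes>\<^bsub>A\<^esub> ex \<in> generate A X" using gen_pow[OF a k] x by (rule generate.eng)
  moreover have "(k, False, {}) \<otimes>\<^bsub>A\<^esub> ex = (k, True, {})" using k by (simp add: mult_A dih_mult_def)
  ultimately show ?thesis by simp
qed

lemma gen_v:
  assumes a: "ea \<in> generate A X" and z: "ez \<in> generate A X" and i: "0 \<le> i" "i < int n"
  shows "(0, False, {i}) \<in> generate A X"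
proof -
  have r: "0 \<le> (- i) mod M" "(- i) mod M < M" using Mpos by auto
  have ir: "i < M" using i(2) n_le_M by linarith
  have "((- i) mod M, False, {}) \<otimes>\<^bsub>A\<^esub> ez \<otimes>\<^bsub>A\<^esub> (i, False, {}) \<in> generate A X"
    by (intro generate.eng gen_pow[OF a] z) (use r i ir in auto)
  moreover have "((- i) mod M, False, {}) \<otimes>\<^bsub>A\<^esub> ez \<otimes>\<^bsub>A\<^esub> (i, False, {}) = (0, False, {i})"
  proof -
    have "((- i) mod M + i) mod M = (- i + i) mod M" by (rule mod_add_left_eq)
    thus ?thesis using i by (simp add: mult_A dih_mult_def hact_def)
  qed
  ultimately show ?thesis by simp
qed

lemma gen_Xset:
  assumes a: "ea \<in> generate A X" and z: "ez \<in> generate A X"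
  shows "Xset \<subseteq> generate A X"
proof
  fix u assume "u \<in> Xset"
  then obtain k S where u: "u = (k, False, S)" and c: "0 \<le> k" "k < M" "S \<subseteq> {0..<int n}"
    unfolding Xset_def carrier_A by auto
  have "finite S" using c(3) finite_subset by blast
  from this c(3) have "(k, False, S) \<in> generate A X"
  proof (induction S rule: finite_subset_induct')
    case empty show ?case using gen_pow[OF a c(1,2)] .
  next
    case (insert i S)
    have "(k, False, S) \<otimes>\<^bsub>A\<^esub> (0, False, {i}) \<in> generate A X"
      using insert gen_v[OF a z] by (intro generate.eng) auto
    moreover have "(k, False, S) \<otimes>\<^bsub>A\<^esub> (0, False, {i}) = (k, False, insert i S)"
    proof -
      have "ha (0, False) ` S = S"
      proof -
        have "ha (0, False) ` S = (\<lambda>s. s) ` S" 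
        proof (intro image_cong)
          fix s assume "s \<in> S"
          hence "0 \<le> s" "s < int n" using insert(3) by auto
          thus "ha (0, False) s = s" by (simp add: hact_def)
        qed simp
        thus ?thesis by simp
      qed
      moreover have "sd S {i} = insert i S" using insert(4) unfolding sd_def by blast
      ultimately show ?thesis using c by (simp add: mult_A dih_mult_def)
    qed
    ultimately show ?case by simp
  qed
  thus "u \<in> generate A X" using u by simp
qed

lemma gen_all:
  assumes a: "ea \<in> generate A X" and z: "ez \<in> generate A X" and x: "ex \<in> generate A X"
  shows "carrier A \<subseteq> generate A X"
proof
  fix u assume u: "u \<in> carrier A"
  then obtain k e S where u1: "u = (k, e, S)" and c: "0 \<le> k" "k < M" "S \<subseteq> {0..<int n}"
    using carrier_A by (cases u) auto
  show "u \<in> generate A X"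
  proof (cases e)
    case False
    thus ?thesis using gen_Xset[OF a z] u u1 by (auto simp: in_Xset)
  next
    case True
    have r: "((- k) mod M, False, S) \<in> Xset" using c Mpos by (simp add: in_Xset carrier_A)
    have "ex \<otimes>\<^bsub>A\<^esub> ((- k) mod M, False, S) \<in> generate A X"
      using gen_Xset[OF a z] r x by (intro generate.eng) auto
    moreover have "ex \<otimes>\<^bsub>A\<^esub> ((- k) mod M, False, S) = (k, True, S)"
    proof -
      have "(0 - (- k) mod M) mod M = (0 - - k) mod M" by (rule mod_diff_right_eq)
      thus ?thesis using c by (simp add: mult_A dih_mult_def)
    qed
    ultimately show ?thesis using u1 True by simp
  qed
qed

lemma gen_Yset:
  assumes a: "ea \<in> generate A X" and zx: "ezx \<in> generate A X"
  shows "Yset \<subseteq> generate A X"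
proof -
  have t: "(k, True, {0}) \<in> generate A X" if "0 \<le> k" "k < M" for k
  proof -
    have "(k, False, {}) \<otimes>\<^bsub>A\<^esub> ezx \<in> generate A X" using gen_pow[OF a that] zx by (rule generate.eng)
    moreover have "(k, False, {}) \<otimes>\<^bsub>A\<^esub> ezx = (k, True, {0})" using that by (simp add: mult_A dih_mult_def)
    ultimately show ?thesis by simp
  qed
  have cj: "(0, True, {j}) \<in> generate A X" if "0 \<le> j" "j < int n" for j
  proof -
    have jr: "j < M" using that(2) n_le_M by linarith
    have "(j, True, {0}) \<otimes>\<^bsub>A\<^esub> (j, False, {}) \<in> generate A X"
      using t[of j] gen_pow[OF a, of j] that jr by (intro generate.eng) auto
    moreover have "(j, True, {0}) \<otimes>\<^bsub>A\<^esub> (j, False, {}) = (0, True, {j})"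
      using that by (simp add: mult_A dih_mult_def hact_def)
    ultimately show ?thesis by simp
  qed
  show ?thesis
  proof
    fix u assume "u \<in> Yset"
    then obtain k e S where u: "u = (k, e, S)" and c: "0 \<le> k" "k < M" "S \<subseteq> {0..<int n}" "odd (card S) \<longleftrightarrow> e"
      unfolding Yset_def carrier_A by auto
    have "finite S" using c(3) finite_subset by blast
    from this c(3) have "\<forall>k e. 0 \<le> k \<longrightarrow> k < M \<longrightarrow> (odd (card S) \<longleftrightarrow> e) \<longrightarrow> (k, e, S) \<in> generate A X"
    proof (induction S rule: finite_subset_induct)
      case empty show ?case using gen_pow[OF a] by auto
    next
      case (insert i S)
      show ?case
      proof (intro allI impI)
        fix k e assume k: "0 \<le> k" "k < M" and p: "odd (card (insert i S)) \<longleftrightarrow> e"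
        define k' where "k' = (- k) mod M"
        have k'r: "0 \<le> k'" "k' < M" unfolding k'_def using Mpos by auto
        have ir: "0 \<le> i" "i < int n" using insert(2) by auto
        have pS: "odd (card S) \<longleftrightarrow> \<not> e" using p insert(1,3) by simp
        have "0 \<le> k' \<longrightarrow> k' < M \<longrightarrow> (odd (card S) \<longleftrightarrow> \<not> e) \<longrightarrow> (k', \<not> e, S) \<in> generate A X"
          using spec[OF spec[OF insert(4), of k'], of "\<not> e"] .
        hence IH: "(k', \<not> e, S) \<in> generate A X" using k'r pS by simp
        define j where "j = ha (hi (k', \<not> e)) i"
        have jr: "0 \<le> j" "j < int n" unfolding j_def using hact_range by auto
        have hj: "ha (k', \<not> e) j = i" unfolding j_def using hact_hinv1[OF k'r ir] .
        have "(0, True, {j}) \<otimes>\<^bsub>A\<^esub> (k', \<not> e, S) \<in> generate A X"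
          using cj[OF jr] IH by (rule generate.eng)
        moreover have "(0, True, {j}) \<otimes>\<^bsub>A\<^esub> (k', \<not> e, S) = (k, e, insert i S)"
        proof -
          have "(0 - k') mod M = (0 - - k) mod M" unfolding k'_def by (rule mod_diff_right_eq)
          hence "(0 - k') mod M = k" using k by simp
          moreover have "sd {i} S = insert i S" using insert(3) unfolding sd_def by blast
          ultimately show ?thesis using hj by (simp add: mult_A dih_mult_def)
        qed
        ultimately show "(k, e, insert i S) \<in> generate A X" by simp
      qed
    qed
    thus "u \<in> generate A X" using u c by blast
  qed
qed

end


lemma in_set_mult: "x \<in> J <#>\<^bsub>G\<^esub> H \<longleftrightarrow> (\<exists>j\<in>J. \<exists>h\<in>H. x = j \<otimes>\<^bsub>G\<^esub> h)"
  unfolding set_mult_def by blast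

context setting begin

lemma gen_sub: "X \<subseteq> K \<Longrightarrow> subgroup K A \<Longrightarrow> generate A X \<subseteq> K"
  by (rule group.generate_subgroup_incl[OF group_A])

lemma gen_H: "generate A {ex, (1, True, {})} = Hset"
proof
  show "generate A {ex, (1, True, {})} \<subseteq> Hset" using M3 by (intro gen_sub sub_Hset) (auto simp: in_Hset)
  have a: "ea \<in> generate A {ex, (1, True, {})}"
    using generate.eng[OF generate.incl generate.incl, of "(1, True, {})" "{ex, (1, True, {})}" ex A] yx_eq by simp
  have x: "ex \<in> generate A {ex, (1, True, {})}" by (rule generate.incl) simp
  show "Hset \<subseteq> generate A {ex, (1, True, {})}"
  proof
    fix u assume "u \<in> Hset"
    then obtain k e where u: "u = (k, e, {})" "0 \<le> k" "k < M" unfolding Hset_def by auto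
    thus "u \<in> generate A {ex, (1, True, {})}" using gen_pow[OF a] gen_T[OF a x] by (cases e) auto
  qed
qed

lemma J_cases: "u \<in> Jset \<Longrightarrow> u \<in> {(0, False, {}), ex, ez, ezx}"
proof -
  assume "u \<in> Jset"
  then obtain e S where u: "u = (0, e, S)" "S \<subseteq> {0}" unfolding Jset_def by auto
  hence "S = {} \<or> S = {0}" by blast
  thus ?thesis using u by (cases e) auto
qed

lemma gen_J: "generate A {ex, ez} = Jset"
proof
  show "generate A {ex, ez} \<subseteq> Jset" by (intro gen_sub sub_Jset) (auto simp: in_Jset)
  have x: "ex \<in> generate A {ex, ez}" and z: "ez \<in> generate A {ex, ez}" by (auto intro: generate.incl)
  have "ez \<otimes>\<^bsub>A\<^esub> ex \<in> generate A {ex, ez}" using z x by (rule generate.eng)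
  hence zx: "ezx \<in> generate A {ex, ez}" using zx_eq by simp
  have o: "(0, False, {}) \<in> generate A {ex, ez}" using generate.one[of A] by (simp add: one_A)
  show "Jset \<subseteq> generate A {ex, ez}" using J_cases x z zx o by blast
qed

lemma gen_a: "generate A {ea} = Hset \<inter> Xset"
proof
  show "generate A {ea} \<subseteq> Hset \<inter> Xset" using M3
    by (intro gen_sub group.subgroups_Inter_pair[OF group_A] sub_Hset sub_Xset) (auto simp: in_Hset in_Xset carrier_A)
  have a: "ea \<in> generate A {ea}" by (rule generate.incl) simp
  show "Hset \<inter> Xset \<subseteq> generate A {ea}"
  proof
    fix u assume "u \<in> Hset \<inter> Xset"
    then obtain k where u: "u = (k, False, {})" "0 \<le> k" "k < M" unfolding Hset_def Xset_def by auto
    thus "u \<in> generate A {ea}" using gen_pow[OF a] by auto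
  qed
qed

lemma gen_z: "generate A {ez} = Jset \<inter> Xset"
proof
  show "generate A {ez} \<subseteq> Jset \<inter> Xset"
    by (intro gen_sub group.subgroups_Inter_pair[OF group_A] sub_Jset sub_Xset) (auto simp: in_Jset in_Xset ez_c)
  have z: "ez \<in> generate A {ez}" by (rule generate.incl) simp
  have o: "(0, False, {}) \<in> generate A {ez}" using generate.one[of A] by (simp add: one_A)
  show "Jset \<inter> Xset \<subseteq> generate A {ez}"
  proof
    fix u assume u: "u \<in> Jset \<inter> Xset"
    hence "u \<in> {(0, False, {}), ex, ez, ezx}" using J_cases by blast
    moreover have "u \<noteq> ex" "u \<noteq> ezx" using u unfolding Xset_def by auto
    ultimately show "u \<in> generate A {ez}" using z o by blast
  qed
qed

lemma gen_zx: "generate A {ezx} = Jset \<inter> Yset"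
proof
  show "generate A {ezx} \<subseteq> Jset \<inter> Yset"
    by (intro gen_sub group.subgroups_Inter_pair[OF group_A] sub_Jset sub_Yset) (auto simp: in_Jset in_Yset ezx_c)
  have z: "ezx \<in> generate A {ezx}" by (rule generate.incl) simp
  have o: "(0, False, {}) \<in> generate A {ezx}" using generate.one[of A] by (simp add: one_A)
  show "Jset \<inter> Yset \<subseteq> generate A {ezx}"
  proof
    fix u assume u: "u \<in> Jset \<inter> Yset"
    hence "u \<in> {(0, False, {}), ex, ez, ezx}" using J_cases by blast
    moreover have "u \<noteq> ex" "u \<noteq> ez" using u unfolding Yset_def by auto
    ultimately show "u \<in> generate A {ezx}" using z o by blast
  qed
qed

lemma gen_X: "generate A {ea, ez} = Xset"
proof
  show "generate A {ea, ez} \<subseteq> Xset" using ea_c ez_c by (intro gen_sub sub_Xset) (auto simp: in_Xset)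
  show "Xset \<subseteq> generate A {ea, ez}" by (rule gen_Xset) (auto intro: generate.incl)
qed

lemma gen_Y: "generate A {ea, ezx} = Yset"
proof
  show "generate A {ea, ezx} \<subseteq> Yset" using ea_c ezx_c by (intro gen_sub sub_Yset) (auto simp: in_Yset)
  show "Yset \<subseteq> generate A {ea, ezx}" by (rule gen_Yset) (auto intro: generate.incl)
qed

lemma gen_xyz: "generate A {ex, (1, True, {}), ez} = carrier A"
proof
  show "generate A {ex, (1, True, {}), ez} \<subseteq> carrier A" using ex_c ez_c M3
    by (intro group.generate_incl[OF group_A]) (auto simp: carrier_A)
  have a: "ea \<in> generate A {ex, (1, True, {}), ez}"
    using generate.eng[OF generate.incl generate.incl, of "(1, True, {})" "{ex, (1, True, {}), ez}" ex A] yx_eq by simp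
  show "carrier A \<subseteq> generate A {ex, (1, True, {}), ez}" by (rule gen_all[OF a]) (auto intro: generate.incl)
qed

lemma HXY: "Hset \<inter> Xset = Hset \<inter> Yset"
  unfolding Hset_def Xset_def Yset_def by auto

lemma JH_sub: "j \<in> Jset \<Longrightarrow> h \<in> Hset \<Longrightarrow> j \<otimes>\<^bsub>A\<^esub> h \<in> JH"
proof -
  assume j: "j \<in> Jset" and h: "h \<in> Hset"
  obtain e' T where j1: "j = (0, e', T)" "T \<subseteq> {0}" using j unfolding Jset_def by auto
  obtain k e where h1: "h = (k, e, {})" "0 \<le> k" "k < M" using h unfolding Hset_def by auto
  obtain d1 d2 where d: "dih (0, e') (k, e) = (d1, d2)" by fastforce
  have c: "j \<otimes>\<^bsub>A\<^esub> h \<in> carrier A" using j h sub_Jset sub_Hset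
    by (intro mult_closed) (auto dest: subgroup.subset)
  have "ha (d1, d2) 0 = ha (k, e) 0" using hact_dih[of n l "(0, e')" "(k, e)" 0] d by (simp add: hact0)
  moreover have "ha (k, e) ` T \<subseteq> {ha (k, e) 0}" using j1 by auto
  ultimately show ?thesis using c unfolding j1 h1 by (simp add: mult_A d in_JH)
qed

lemma JH_dec1: "(k, e, {}) = \<one>\<^bsub>A\<^esub> \<otimes>\<^bsub>A\<^esub> (k, e, {})" if "0 \<le> k" "k < M"
  using that by (simp add: one_A mult_A dih_mult_def)

lemma JH_dec2: "(k, e, {ha (k, e) 0}) = ez \<otimes>\<^bsub>A\<^esub> (k, e, {})" if "0 \<le> k" "k < M"
  using that by (simp add: mult_A dih_mult_def)

lemma JH_dec3: "(k, True, {ha (k, True) 0}) = ezx \<otimes>\<^bsub>A\<^esub> ((- k) mod M, False, {})" if "0 \<le> k" "k < M"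
proof -
  have "(0 - (- k) mod M) mod M = (0 - - k) mod M" by (rule mod_diff_right_eq)
  hence "(0 - (- k) mod M) mod M = k" using that by simp
  moreover have "((- k) mod M) mod int n = (- k) mod int n" by (rule modnl_1)
  ultimately show ?thesis by (simp add: mult_A dih_mult_def hact_def)
qed

lemma JH_cases:
  assumes "u \<in> JH"
  obtains k e where "u = (k, e, {})" "0 \<le> k" "k < M" | k e where "u = (k, e, {ha (k, e) 0})" "0 \<le> k" "k < M"
proof -
  obtain k e S where u: "u = (k, e, S)" "0 \<le> k" "k < M" "S \<subseteq> {ha (k, e) 0}"
    using assms unfolding JH_def carrier_A by auto
  hence "S = {} \<or> S = {ha (k, e) 0}" by blast
  thus ?thesis using that u by blast
qed

lemma one_in: "\<one>\<^bsub>A\<^esub> \<in> Jset" "\<one>\<^bsub>A\<^esub> \<in> Xset" "\<one>\<^bsub>A\<^esub> \<in> Yset"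
  using Mpos by (auto simp: one_A in_Jset in_Xset in_Yset carrier_A)

lemma JH_A: "Jset <#>\<^bsub>A\<^esub> Hset = JH"
proof
  show "Jset <#>\<^bsub>A\<^esub> Hset \<subseteq> JH" using JH_sub unfolding set_mult_def by blast
  show "JH \<subseteq> Jset <#>\<^bsub>A\<^esub> Hset"
  proof
    fix u assume "u \<in> JH"
    thus "u \<in> Jset <#>\<^bsub>A\<^esub> Hset"
    proof (cases rule: JH_cases)
      case (1 k e) thus ?thesis using JH_dec1[of k e] one_in unfolding in_set_mult
        by (intro bexI[where x="\<one>\<^bsub>A\<^esub>"] bexI[where x="(k, e, {})"]) (auto simp: in_Hset)
    next
      case (2 k e) thus ?thesis using JH_dec2[of k e] unfolding in_set_mult
        by (intro bexI[where x="ez"] bexI[where x="(k, e, {})"]) (auto simp: in_Hset in_Jset)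
    qed
  qed
qed

lemma JH_X: "(Jset \<inter> Xset) <#>\<^bsub>A\<^esub> (Hset \<inter> Xset) = JH \<inter> Xset"
proof
  show "(Jset \<inter> Xset) <#>\<^bsub>A\<^esub> (Hset \<inter> Xset) \<subseteq> JH \<inter> Xset"
    using JH_sub subgroup.m_closed[OF sub_Xset] unfolding set_mult_def by blast
  show "JH \<inter> Xset \<subseteq> (Jset \<inter> Xset) <#>\<^bsub>A\<^esub> (Hset \<inter> Xset)"
  proof
    fix u assume u: "u \<in> JH \<inter> Xset"
    hence "u \<in> JH" by simp
    thus "u \<in> (Jset \<inter> Xset) <#>\<^bsub>A\<^esub> (Hset \<inter> Xset)"
    proof (cases rule: JH_cases)
      case (1 k e)
      hence "\<not> e" using u by (simp add: in_Xset)
      thus ?thesis using 1 JH_dec1[of k e] one_in unfolding in_set_mult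
        by (intro bexI[where x="\<one>\<^bsub>A\<^esub>"] bexI[where x="(k, e, {})"]) (auto simp: in_Hset in_Xset carrier_A)
    next
      case (2 k e)
      hence "\<not> e" using u by (simp add: in_Xset)
      thus ?thesis using 2 JH_dec2[of k e] ez_c unfolding in_set_mult
        by (intro bexI[where x="ez"] bexI[where x="(k, e, {})"]) (auto simp: in_Hset in_Jset in_Xset carrier_A)
    qed
  qed
qed

lemma JH_Y: "(Jset \<inter> Yset) <#>\<^bsub>A\<^esub> (Hset \<inter> Yset) = JH \<inter> Yset"
proof
  show "(Jset \<inter> Yset) <#>\<^bsub>A\<^esub> (Hset \<inter> Yset) \<subseteq> JH \<inter> Yset"
    using JH_sub subgroup.m_closed[OF sub_Yset] unfolding set_mult_def by blast
  show "JH \<inter> Yset \<subseteq> (Jset \<inter> Yset) <#>\<^bsub>A\<^esub> (Hset \<inter> Yset)"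
  proof
    fix u assume u: "u \<in> JH \<inter> Yset"
    hence "u \<in> JH" by simp
    thus "u \<in> (Jset \<inter> Yset) <#>\<^bsub>A\<^esub> (Hset \<inter> Yset)"
    proof (cases rule: JH_cases)
      case (1 k e)
      hence "\<not> e" using u by (simp add: in_Yset)
      thus ?thesis using 1 JH_dec1[of k e] one_in unfolding in_set_mult
        by (intro bexI[where x="\<one>\<^bsub>A\<^esub>"] bexI[where x="(k, e, {})"]) (auto simp: in_Hset in_Yset carrier_A)
    next
      case (2 k e)
      hence e: "e" using u by (simp add: in_Yset)
      have r: "0 \<le> (- k) mod M" "(- k) mod M < M" using Mpos by auto
      show ?thesis using 2 e JH_dec3[of k] ezx_c r unfolding in_set_mult
        by (intro bexI[where x="ezx"] bexI[where x="((- k) mod M, False, {})"]) (auto simp: in_Hset in_Jset in_Yset carrier_A)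
    qed
  qed
qed

end


lemma hyp_ends: "e \<in> edges (hypercube_mult n l) \<Longrightarrow> card (ends (hypercube_mult n l) e) = 2"
proof -
  assume "e \<in> edges (hypercube_mult n l)"
  then obtain S T j where e: "e = ({S, T}, j)" and c: "S \<subseteq> {..<n}" "T \<subseteq> {..<n}" "card (sd S T) = 1"
    unfolding edges_Q by blast
  have "S \<noteq> T" using c(3) by auto
  moreover have "ends (hypercube_mult n l) e = {S, T}" unfolding ends_def verts_Q inc_Q e using c by auto
  ultimately show ?thesis by simp
qed

lemma hyp_edge_in: "S \<subseteq> {..<n} \<Longrightarrow> i < n \<Longrightarrow> j < l \<Longrightarrow> ({S, sd S {i}}, j) \<in> edges (hypercube_mult n l)"
proof -
  assume a: "S \<subseteq> {..<n}" "i < n" "j < l"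
  have "sd S {i} \<subseteq> {..<n}" using a by (intro sd_subset) auto
  moreover have "card (sd S (sd S {i})) = 1" by simp
  ultimately show ?thesis unfolding edges_Q using a by blast
qed

lemma pair_eq_of_mem: "u \<in> {S, T} \<Longrightarrow> w \<in> {S, T} \<Longrightarrow> u \<noteq> w \<Longrightarrow> {S, T} = {u, w}"
  by blast

lemma hyp_nbrs:
  assumes l: "l \<ge> 1" and u: "u \<subseteq> {..<n}"
  shows "nbrs (hypercube_mult n l) u = (\<lambda>i. sd u {i}) ` {..<n}"
proof
  show "nbrs (hypercube_mult n l) u \<subseteq> (\<lambda>i. sd u {i}) ` {..<n}"
  proof
    fix w assume "w \<in> nbrs (hypercube_mult n l) u"
    then obtain e where w: "w \<subseteq> {..<n}" "w \<noteq> u" and e: "e \<in> edges (hypercube_mult n l)" "u \<in> fst e" "w \<in> fst e"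
      unfolding nbrs_def verts_Q inc_Q by blast
    then obtain S T j where e1: "e = ({S, T}, j)" and c: "card (sd S T) = 1"
      unfolding edges_Q by blast
    have "{S, T} = {u, w}" using e(2,3) e1 w(2) by (intro pair_eq_of_mem) auto
    hence "sd u w = sd S T" by (auto simp: doubleton_eq_iff sd_comm)
    hence "card (sd u w) = 1" using c by simp
    then obtain i where i: "sd u w = {i}" using card_1_singletonE by blast
    have "i < n" using i u w unfolding sd_def by blast
    moreover have "w = sd u {i}" using i by (simp add: sd_eq_iff)
    ultimately show "w \<in> (\<lambda>i. sd u {i}) ` {..<n}" by blast
  qed
  show "(\<lambda>i. sd u {i}) ` {..<n} \<subseteq> nbrs (hypercube_mult n l) u"
  proof
    fix w assume "w \<in> (\<lambda>i. sd u {i}) ` {..<n}"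
    then obtain i where i: "i < n" "w = sd u {i}" by blast
    have "w \<subseteq> {..<n}" unfolding i(2) by (intro sd_subset) (use i u in auto)
    moreover have "w \<noteq> u" using i by (auto simp: sd_def)
    moreover have "({u, w}, 0) \<in> edges (hypercube_mult n l)" using hyp_edge_in[OF u i(1), of 0] l i by simp
    ultimately show "w \<in> nbrs (hypercube_mult n l) u" unfolding nbrs_def verts_Q inc_Q
      using u by (intro CollectI conjI) (auto intro!: bexI[where x = "({u, w}, 0)"])
  qed
qed

lemma hyp_valency: "l \<ge> 1 \<Longrightarrow> valency_multiplicity (hypercube_mult n l) n l"
proof -
  assume l: "l \<ge> 1"
  let ?Q = "hypercube_mult n l"
  have fv: "finite (verts ?Q)" unfolding verts_Q by simp
  have fe: "finite (edges ?Q)"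
  proof (rule finite_subset)
    show "edges ?Q \<subseteq> Pow (Pow {..<n}) \<times> {..<l}" unfolding edges_Q by auto
  qed simp
  have nb: "card (nbrs ?Q u) = n" if u: "u \<in> verts ?Q" for u
  proof -
    have u': "u \<subseteq> {..<n}" using u verts_Q by auto
    have "inj_on (\<lambda>i. sd u {i}) {..<n}"
    proof (rule inj_onI)
      fix i i' assume "sd u {i} = sd u {i'}"
      hence "{i} = {i'}" by (metis sd_cancel)
      thus "i = i'" by simp
    qed
    thus ?thesis unfolding hyp_nbrs[OF l u'] by (simp add: card_image)
  qed
  have mult: "card {e \<in> edges ?Q. inc ?Q u e \<and> inc ?Q w e} = l" if u: "u \<in> verts ?Q" and w: "w \<in> nbrs ?Q u" for u w
  proof -
    have u': "u \<subseteq> {..<n}" using u verts_Q by auto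
    obtain i where i: "i < n" "w = sd u {i}" using w hyp_nbrs[OF l u'] by auto
    have wu: "w \<noteq> u" using i by (auto simp: sd_def)
    have "{e \<in> edges ?Q. inc ?Q u e \<and> inc ?Q w e} = (\<lambda>j. ({u, w}, j)) ` {..<l}"
    proof
      show "{e \<in> edges ?Q. inc ?Q u e \<and> inc ?Q w e} \<subseteq> (\<lambda>j. ({u, w}, j)) ` {..<l}"
      proof
        fix e assume "e \<in> {e \<in> edges ?Q. inc ?Q u e \<and> inc ?Q w e}"
        hence e: "e \<in> edges ?Q" "u \<in> fst e" "w \<in> fst e" by (simp_all add: inc_Q)
        then obtain S T j where e1: "e = ({S, T}, j)" and j: "j < l" unfolding edges_Q by blast
        have "{S, T} = {u, w}" using e(2,3) e1 wu by (intro pair_eq_of_mem) auto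
        thus "e \<in> (\<lambda>j. ({u, w}, j)) ` {..<l}" using e1 j by auto
      qed
      show "(\<lambda>j. ({u, w}, j)) ` {..<l} \<subseteq> {e \<in> edges ?Q. inc ?Q u e \<and> inc ?Q w e}"
      proof
        fix e assume "e \<in> (\<lambda>j. ({u, w}, j)) ` {..<l}"
        then obtain j where j: "j < l" "e = ({u, w}, j)" by blast
        have "e \<in> edges ?Q" using hyp_edge_in[OF u' i(1) j(1)] i j by simp
        thus "e \<in> {e \<in> edges ?Q. inc ?Q u e \<and> inc ?Q w e}" using j by (simp add: inc_Q)
      qed
    qed
    moreover have "inj_on (\<lambda>j. ({u, w}, j)) {..<l}" by (rule inj_onI) simp
    ultimately show ?thesis by (simp add: card_image)
  qed
  show ?thesis unfolding valency_multiplicity_def using fv fe hyp_ends nb mult by blast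
qed

context setting begin

lemma sV_gen:
  assumes K: "K \<subseteq> carrier A" and w: "\<And>T. T \<subseteq> {..<n} \<Longrightarrow> \<exists>e. (0, e, int ` T) \<in> K"
  shows "phiV ` K = verts (Qn n l)"
proof
  show "phiV ` K \<subseteq> verts (Qn n l)"
  proof
    fix v assume "v \<in> phiV ` K"
    then obtain u where "u \<in> K" "v = phiV u" by blast
    hence "v \<in> Pow {..<n}" using phiV_sub K by blast
    thus "v \<in> verts (Qn n l)" by (simp add: verts_Q)
  qed
  show "verts (Qn n l) \<subseteq> phiV ` K"
  proof
    fix T assume "T \<in> verts (Qn n l)"
    hence T: "T \<subseteq> {..<n}" by (simp add: verts_Q)
    then obtain e where e: "(0, e, int ` T) \<in> K" using w by blast
    have "phiV (0, e, int ` T) = T" using phiV_witness[OF T, of 0 e] Mpos by simp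
    thus "T \<in> phiV ` K" using e by (metis image_eqI)
  qed
qed

lemma sE_gen:
  assumes K: "K \<subseteq> carrier A"
    and w: "\<And>S i j. S \<subseteq> {..<n} \<Longrightarrow> i < n \<Longrightarrow> j < l \<Longrightarrow>
             \<exists>e. (if e then (- (int n * int j + int i)) mod M else int n * int j + int i, e, int ` S) \<in> K"
  shows "phiE ` K = edges (Qn n l)"
proof
  show "phiE ` K \<subseteq> edges (Qn n l)" using K phiE_sub by auto
  show "edges (Qn n l) \<subseteq> phiE ` K"
  proof
    fix E assume "E \<in> edges (Qn n l)"
    then obtain S i j where c: "S \<subseteq> {..<n}" "i < n" "j < l" and E: "E = ({S, sd S {i}}, j)"
      using phiE_sup by blast
    obtain e where e: "(if e then (- (int n * int j + int i)) mod M else int n * int j + int i, e, int ` S) \<in> K"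
      using w[OF c] by blast
    have "phiE (if e then (- (int n * int j + int i)) mod M else int n * int j + int i, e, int ` S) = E"
      using phiE_witness[OF c, of e] E by simp
    thus "E \<in> phiE ` K" using e by (metis image_eqI)
  qed
qed

lemma card_int_img: "card (int ` T) = card T" by (simp add: card_image)

lemma wit_c: "S \<subseteq> {..<n} \<Longrightarrow> i < n \<Longrightarrow> j < l \<Longrightarrow>
  (if e then (- (int n * int j + int i)) mod M else int n * int j + int i, e, int ` S) \<in> carrier A"
  using phiE_witness by blast

lemma iso_A: "incgraph_iso (Qn n l) (cos_graph A Hset Jset)"
proof -
  have Hc: "Hset \<subseteq> carrier A" using sub_Hset subgroup.subset by blast
  have Jc: "Jset \<subseteq> carrier A" using sub_Jset subgroup.subset by blast
  have JHc: "JH \<subseteq> carrier A" unfolding JH_def by auto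
  have "incgraph_iso (Qn n l) (cos_graph (A\<lparr>carrier := carrier A\<rparr>) Hset Jset)"
  proof (rule iso_sub)
    show "subgroup (carrier A) A" by (rule group.subgroup_self[OF group_A])
    show "subgroup Hset A" by (rule sub_Hset)
    show "subgroup Jset A" by (rule sub_Jset)
    show "Hset = Hset \<inter> carrier A" using Hc by blast
    show "Jset = Jset \<inter> carrier A" using Jc by blast
    show "Jset <#>\<^bsub>A\<^esub> Hset = JH \<inter> carrier A" using JH_A JHc by blast
    show "phiV ` carrier A = verts (Qn n l)"
      by (rule sV_gen) (use Mpos nat_img_sub in \<open>auto simp: carrier_A\<close>)
    show "phiE ` carrier A = edges (Qn n l)"
      by (rule sE_gen) (use wit_c in auto)
  qed
  moreover have "A\<lparr>carrier := carrier A\<rparr> = A" by (simp add: groupA_def)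
  ultimately show ?thesis by simp
qed

lemma iso_X: "incgraph_iso (Qn n l) (cos_graph (A\<lparr>carrier := Xset\<rparr>) (Hset \<inter> Xset) (Jset \<inter> Xset))"
proof (rule iso_sub)
  show "subgroup Xset A" by (rule sub_Xset)
  show "subgroup (Hset \<inter> Xset) A" by (intro group.subgroups_Inter_pair[OF group_A] sub_Hset sub_Xset)
  show "subgroup (Jset \<inter> Xset) A" by (intro group.subgroups_Inter_pair[OF group_A] sub_Jset sub_Xset)
  show "(Jset \<inter> Xset) <#>\<^bsub>A\<^esub> (Hset \<inter> Xset) = JH \<inter> Xset" by (rule JH_X)
  show "phiV ` Xset = verts (Qn n l)"
  proof (rule sV_gen)
    show "Xset \<subseteq> carrier A" unfolding Xset_def by auto
    fix T :: "nat set" assume "T \<subseteq> {..<n}"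
    hence "(0, False, int ` T) \<in> Xset" using Mpos by (auto simp: in_Xset carrier_A)
    thus "\<exists>e. (0, e, int ` T) \<in> Xset" by blast
  qed
  show "phiE ` Xset = edges (Qn n l)"
  proof (rule sE_gen)
    show "Xset \<subseteq> carrier A" unfolding Xset_def by auto
    fix S i j assume c: "S \<subseteq> {..<n}" "i < n" "j < l"
    have "(if False then (- (int n * int j + int i)) mod M else int n * int j + int i, False, int ` S) \<in> Xset"
      using wit_c[OF c, of False] by (simp add: in_Xset)
    thus "\<exists>e. (if e then (- (int n * int j + int i)) mod M else int n * int j + int i, e, int ` S) \<in> Xset"
      by blast
  qed
qed simp_all

lemma iso_Y: "incgraph_iso (Qn n l) (cos_graph (A\<lparr>carrier := Yset\<rparr>) (Hset \<inter> Yset) (Jset \<inter> Yset))"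
proof (rule iso_sub)
  show "subgroup Yset A" by (rule sub_Yset)
  show "subgroup (Hset \<inter> Yset) A" by (intro group.subgroups_Inter_pair[OF group_A] sub_Hset sub_Yset)
  show "subgroup (Jset \<inter> Yset) A" by (intro group.subgroups_Inter_pair[OF group_A] sub_Jset sub_Yset)
  show "(Jset \<inter> Yset) <#>\<^bsub>A\<^esub> (Hset \<inter> Yset) = JH \<inter> Yset" by (rule JH_Y)
  show "phiV ` Yset = verts (Qn n l)"
  proof (rule sV_gen)
    show "Yset \<subseteq> carrier A" unfolding Yset_def by auto
    fix T :: "nat set" assume "T \<subseteq> {..<n}"
    hence "(0, odd (card T), int ` T) \<in> Yset" using Mpos by (auto simp: in_Yset carrier_A card_int_img)
    thus "\<exists>e. (0, e, int ` T) \<in> Yset" by blast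
  qed
  show "phiE ` Yset = edges (Qn n l)"
  proof (rule sE_gen)
    show "Yset \<subseteq> carrier A" unfolding Yset_def by auto
    fix S i j assume c: "S \<subseteq> {..<n}" "i < n" "j < l"
    let ?e = "odd (card S)"
    have "(if ?e then (- (int n * int j + int i)) mod M else int n * int j + int i, ?e, int ` S) \<in> Yset"
      using wit_c[OF c, of ?e] by (simp add: in_Yset card_int_img)
    thus "\<exists>e. (if e then (- (int n * int j + int i)) mod M else int n * int j + int i, e, int ` S) \<in> Yset"
      by blast
  qed
qed simp_all

lemma finite_A: "finite (carrier A)"
proof (rule finite_subset)
  show "carrier A \<subseteq> {0..<M} \<times> UNIV \<times> Pow {0..<int n}" by (auto simp: groupA_def)
qed simp

lemma flag: "flag_regular_triple A ex (1, True, {}) ez"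
proof -
  have yc: "(1::int, True, {}::int set) \<in> carrier A" using M3 by (simp add: carrier_A)
  have inv_x: "involution A ex" unfolding involution_def using ex_c by (simp add: one_A mult_A dih_mult_def)
  have inv_y: "involution A (1, True, {})" unfolding involution_def using yc by (simp add: one_A mult_A dih_mult_def)
  have inv_z: "involution A ez" unfolding involution_def using ez_c by (simp add: one_A mult_A dih_mult_def hact_def)
  have comm: "ex \<otimes>\<^bsub>A\<^esub> ez = ez \<otimes>\<^bsub>A\<^esub> ex" by (simp add: mult_A dih_mult_def hact_def)
  have notin: "ez \<notin> generate A {ex, (1, True, {})}" unfolding gen_H by (simp add: in_Hset)
  have o1: "group.ord A (ex \<otimes>\<^bsub>A\<^esub> (1, True, {})) \<noteq> 0"
    using group.ord_ge_1[OF group_A finite_A mult_closed[OF ex_c yc]] by simp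
  have o2: "group.ord A ((1, True, {}) \<otimes>\<^bsub>A\<^esub> ez) \<noteq> 0"
    using group.ord_ge_1[OF group_A finite_A mult_closed[OF yc ez_c]] by simp
  show ?thesis unfolding flag_regular_triple_def
    using group_A inv_x inv_y inv_z comm notin o1 o2 gen_xyz by simp
qed

end

theorem lemma6p2:
  fixes n l :: nat
  assumes "n \<ge> 3" and "l \<ge> 1"
  defines "A \<equiv> groupA n l"
    and "a \<equiv> elem_a n l"
    and "x \<equiv> elem_x"
    and "z \<equiv> elem_z"
  defines "y \<equiv> a \<otimes>\<^bsub>A\<^esub> x"
  defines "H \<equiv> generate A {x, y}"
    and "J \<equiv> generate A {x, z}"
    and "X \<equiv> A\<lparr>carrier := generate A {a, z}\<rparr>"
    and "Y \<equiv> A\<lparr>carrier := generate A {a, z \<otimes>\<^bsub>A\<^esub> x}\<rparr>"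
  shows "flag_regular_triple A x y z
    \<and> incgraph_iso (hypercube_mult n l) (cos_graph A H J)
    \<and> incgraph_iso (cos_graph A H J) (cos_graph X (generate A {a}) (generate A {z}))
    \<and> incgraph_iso (cos_graph A H J) (cos_graph Y (generate A {a}) (generate A {z \<otimes>\<^bsub>A\<^esub> x}))
    \<and> valency_multiplicity (cos_graph A H J) n l"
proof -
  interpret S: setting n l using assms(1,2) by unfold_locales
  have a: "a = S.ea" unfolding a_def by (rule S.elem_a_eq)
  have x: "x = S.ex" unfolding x_def elem_x_def ..
  have z: "z = S.ez" unfolding z_def elem_z_def ..
  have y: "y = (1, True, {})" unfolding y_def A_def a x by (rule S.y_eq)
  have zx: "z \<otimes>\<^bsub>A\<^esub> x = S.ezx" unfolding A_def z x by (rule S.zx_eq)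
  have H: "H = S.Hset" unfolding H_def A_def x y by (rule S.gen_H)
  have J: "J = S.Jset" unfolding J_def A_def x z by (rule S.gen_J)
  have X: "X = A\<lparr>carrier := S.Xset\<rparr>" unfolding X_def a z A_def S.gen_X ..
  have Y: "Y = A\<lparr>carrier := S.Yset\<rparr>" unfolding Y_def zx unfolding a A_def S.gen_Y ..
  have ga: "generate A {a} = S.Hset \<inter> S.Xset" unfolding a A_def by (rule S.gen_a)
  have gz: "generate A {z} = S.Jset \<inter> S.Xset" unfolding z A_def by (rule S.gen_z)
  have gzx: "generate A {z \<otimes>\<^bsub>A\<^esub> x} = S.Jset \<inter> S.Yset" unfolding zx unfolding A_def by (rule S.gen_zx)
  have isoA: "incgraph_iso (hypercube_mult n l) (cos_graph A H J)" unfolding H J A_def by (rule S.iso_A)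
  have isoX: "incgraph_iso (hypercube_mult n l) (cos_graph X (generate A {a}) (generate A {z}))"
    unfolding X ga gz unfolding A_def by (rule S.iso_X)
  have isoY: "incgraph_iso (hypercube_mult n l) (cos_graph Y (generate A {a}) (generate A {z \<otimes>\<^bsub>A\<^esub> x}))"
    unfolding Y ga gzx unfolding S.HXY unfolding A_def by (rule S.iso_Y)
  have fl: "flag_regular_triple A x y z" unfolding A_def x y z by (rule S.flag)
  show ?thesis
    using fl isoA iso_trans[OF iso_sym[OF isoA] isoX] iso_trans[OF iso_sym[OF isoA] isoY]
      iso_valency[OF isoA hyp_valency[OF assms(2)]] by blast
qed


end
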